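(* Let $d \geq 1$, and let observed data $(y_1,\mathbf{x}_1),\ldots,(y_n,\mathbf{x}_n)$ with $y_i \in \mathbb{R}$, $\mathbf{x}_i \in \mathbb{R}^d$ be given, together with a family of conditional densities $\{p_n(\cdot \mid \mathbf{x}) : \mathbf{x}\in\mathbb{R}^d\}$ on $\mathbb{R}$ with distribution functions $P_n(\cdot\mid\mathbf{x})$. Generate $(Y_{i+1},\mathbf{X}_{i+1})$ for $i = n, n+1,\ldots$ by predictive resampling: $\mathbf{X}_{i+1}$ is drawn uniformly at random from $\{\mathbf{x}_1,\ldots,\mathbf{x}_n,\mathbf{X}_{n+1},\ldots,\mathbf{X}_i\}$ (the Bayesian bootstrap), then $Y_{i+1} \sim P_i(\cdot \mid \mathbf{X}_{i+1})$, and the conditional densities are updated by $$p_{i+1}(y \mid \mathbf{x}) = \left\{1-\alpha_{i+1}(\mathbf{x},\mathbf{X}_{i+1})+ \alpha_{i+1}(\mathbf{x},\mathbf{X}_{i+1})\, c_{\rho_y}\left(q_i,r_i\right)\right\} p_i(y\mid \mathbf{x}),$$ with $q_i = P_i(y\mid\mathbf{x})$, $r_i = P_i(Y_{i+1}\mid \mathbf{X}_{i+1})$ and $$\alpha_{i}(\mathbf{x},\mathbf{x}') = \frac{\alpha_{i}\prod_{j=1}^d c_{\rho_{x^j}} \left\{\Phi\left(x^j\right),\Phi\left(x'^j\right)\right\}}{1- \alpha_{i} + \alpha_{i}\prod_{j=1}^d c_{\rho_{x^j}} \left\{\Phi\left(x^j\right),\Phi\left(x'^j\right)\right\}}.$$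 Then for each $\mathbf{x} \in \mathbb{R}^d$ there is a constant $C$, depending only on the bandwidths $\rho$ and on $\mathbf{x}$, such that for all $M > N \geq n$ and any $\epsilon \geq 0$, $$\sup_{y} \,\mathbb{P}\left(|P_{M}(y \mid \mathbf{x}) - P_{N}(y\mid\mathbf{x})| \geq \epsilon\right) \leq 2\exp\left( \frac{-\epsilon^2}{\frac{4\epsilon C\alpha_{N+1} }{3}+ 2C^2\sum_{i=N+1}^M\alpha^2_{i}}\right).$$
   Context: $\rho_y, \rho_{x^1},\ldots,\rho_{x^d} \in (0,1)$ are bandwidths; $\alpha_i = (2-1/i)/(i+1)$; $x^j$ denotes the $j$-th coordinate of $\mathbf{x}$. $P_i(\cdot\mid\mathbf{x})$ is the distribution function of $p_i(\cdot\mid\mathbf{x})$. $\Phi$ is the standard normal distribution function, and $c_\rho(u,v) = \mathcal{N}_2\{\Phi^{-1}(u),\Phi^{-1}(v)\mid 0,1,\rho\}/[\mathcal{N}\{\Phi^{-1}(u)\mid 0,1\}\mathcal{N}\{\Phi^{-1}(v)\mid 0,1\}]$ is the bivariate Gaussian copula density, where $\mathcal{N}(\cdot\mid 0,1)$ is the standard normal density and $\mathcal{N}_2(\cdot,\cdot\mid 0,1,\rho)$ the standard bivariate normal density with correlation $\rho$. *)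

theory Defs
  imports "HOL-Probability.Probability"
begin

definition Phi :: "real \<Rightarrow> real" where
  "Phi z = (LINT t:{..z}|lborel. std_normal_density t)"

definition Phi_inv :: "real \<Rightarrow> real" where
  "Phi_inv u = (THE z. Phi z = u)"

definition bvn_density :: "real \<Rightarrow> real \<Rightarrow> real \<Rightarrow> real" where
  "bvn_density \<rho> a b =
     exp (- (a\<^sup>2 - 2 * \<rho> * a * b + b\<^sup>2) / (2 * (1 - \<rho>\<^sup>2))) / (2 * pi * sqrt (1 - \<rho>\<^sup>2))"

definition gauss_copula :: "real \<Rightarrow> real \<Rightarrow> real \<Rightarrow> real" where
  "gauss_copula \<rho> u v =
     bvn_density \<rho> (Phi_inv u) (Phi_inv v) /
       (std_normal_density (Phi_inv u) * std_normal_density (Phi_inv v))"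

definition alpha :: "nat \<Rightarrow> real" where
  "alpha i = (2 - 1 / real i) / (real i + 1)"

definition alpha_x :: "nat \<Rightarrow> ('d::finite \<Rightarrow> real) \<Rightarrow> real^'d \<Rightarrow> real^'d \<Rightarrow> real" where
  "alpha_x i \<rho>x x x' =
     (let c = (\<Prod>j\<in>UNIV. gauss_copula (\<rho>x j) (Phi (x $ j)) (Phi (x' $ j)))
      in alpha i * c / (1 - alpha i + alpha i * c))"

(* A path of the predictive resampling after the observed data:
   \<omega> k = (X_{n+1+k}, Y_{n+1+k}).
   pdens p0 \<rho>y \<rho>x n k \<omega> = p_{n+k}(\<cdot> | \<cdot>), a function of the first k entries of \<omega>. *)
primrec pdens :: "(real^'d \<Rightarrow> real \<Rightarrow> real) \<Rightarrow> real \<Rightarrow> ('d::finite \<Rightarrow> real) \<Rightarrow> nat \<Rightarrow> nat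
     \<Rightarrow> (nat \<Rightarrow> (real^'d) \<times> real) \<Rightarrow> real^'d \<Rightarrow> real \<Rightarrow> real" where
  "pdens p0 \<rho>y \<rho>x n 0 \<omega> = p0"
| "pdens p0 \<rho>y \<rho>x n (Suc k) \<omega> =
     (\<lambda>x y. let P = (\<lambda>x' y'. LINT t:{..y'}|lborel. pdens p0 \<rho>y \<rho>x n k \<omega> x' t);
               a = alpha_x (n + k + 1) \<rho>x x (fst (\<omega> k));
               q = P x y;
               r = P (fst (\<omega> k)) (snd (\<omega> k))
           in (1 - a + a * gauss_copula \<rho>y q r) * pdens p0 \<rho>y \<rho>x n k \<omega> x y)"

definition pcdf :: "(real^'d \<Rightarrow> real \<Rightarrow> real) \<Rightarrow> real \<Rightarrow> ('d::finite \<Rightarrow> real) \<Rightarrow> nat \<Rightarrow> nat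
     \<Rightarrow> (nat \<Rightarrow> (real^'d) \<times> real) \<Rightarrow> real^'d \<Rightarrow> real \<Rightarrow> real" where
  "pcdf p0 \<rho>y \<rho>x n k \<omega> x y = (LINT t:{..y}|lborel. pdens p0 \<rho>y \<rho>x n k \<omega> x t)"

definition path_space :: "(nat \<Rightarrow> (real^'d) \<times> real) measure" where
  "path_space = PiM UNIV (\<lambda>_. borel)"

(* one predictive-resampling step number k+1 (producing (X_{n+k+1}, Y_{n+k+1})) given
   the path so far: X is drawn uniformly among x_1..x_n, X_{n+1}..X_{n+k}
   (Bayesian bootstrap), then Y ~ p_{n+k}(\<cdot> | X). *)
definition step :: "(real^'d \<Rightarrow> real \<Rightarrow> real) \<Rightarrow> real \<Rightarrow> ('d::finite \<Rightarrow> real) \<Rightarrow> nat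
     \<Rightarrow> (nat \<Rightarrow> real^'d) \<Rightarrow> nat \<Rightarrow> (nat \<Rightarrow> (real^'d) \<times> real) \<Rightarrow> ((real^'d) \<times> real) measure" where
  "step p0 \<rho>y \<rho>x n xs k \<omega> =
     bind (uniform_count_measure {..<n + k})
       (\<lambda>j. let X = (if j < n then xs j else fst (\<omega> (j - n)))
            in distr (density lborel (\<lambda>y. ennreal (pdens p0 \<rho>y \<rho>x n k \<omega> X y))) borel
                     (\<lambda>y. (X, y)))"

(* law of the path after k resampling steps (entries \<ge> k are a dummy constant) *)
primrec law :: "(real^'d \<Rightarrow> real \<Rightarrow> real) \<Rightarrow> real \<Rightarrow> ('d::finite \<Rightarrow> real) \<Rightarrow> nat
     \<Rightarrow> (nat \<Rightarrow> real^'d) \<Rightarrow> nat \<Rightarrow> (nat \<Rightarrow> (real^'d) \<times> real) measure" where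
  "law p0 \<rho>y \<rho>x n xs 0 = return path_space (\<lambda>_. (0, 0))"
| "law p0 \<rho>y \<rho>x n xs (Suc k) =
     bind (law p0 \<rho>y \<rho>x n xs k)
       (\<lambda>\<omega>. distr (step p0 \<rho>y \<rho>x n xs k \<omega>) path_space (\<lambda>z. fun_upd \<omega> k z))"

end

theory Submission
  imports Defs
begin

definition is_dens :: "(real \<Rightarrow> real) \<Rightarrow> bool" where
  "is_dens p \<longleftrightarrow> p \<in> borel_measurable lborel \<and> (\<forall>t. p t \<ge> 0) \<and> integrable lborel p
      \<and> (LINT t|lborel. p t) = 1"

definition Fc :: "(real \<Rightarrow> real) \<Rightarrow> real \<Rightarrow> real" where
  "Fc p y = (LINT t:{..y}|lborel. p t)"

lemma is_densD:
  assumes "is_dens p"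
  shows "p \<in> borel_measurable lborel" "\<And>t. p t \<ge> 0" "integrable lborel p" "(LINT t|lborel. p t) = 1"
  using assms by (auto simp: is_dens_def)

lemma is_dens_borel: "is_dens p \<Longrightarrow> p \<in> borel_measurable borel"
  using is_densD(1) by (simp add: measurable_lborel1 cong: measurable_cong_sets)

lemma is_dens_nn: "is_dens p \<Longrightarrow> (\<integral>\<^sup>+t. ennreal (p t) \<partial>lborel) = 1"
  using is_densD[of p] by (subst nn_integral_eq_integral) auto

lemma is_densI_nn:
  assumes "p \<in> borel_measurable borel" "\<And>t. p t \<ge> 0" "(\<integral>\<^sup>+t. ennreal (p t) \<partial>lborel) = 1"
  shows "is_dens p"
proof -
  have i: "integrable lborel p"
    using assms by (intro integrableI_nonneg) auto
  have "(LINT t|lborel. p t) = enn2real (\<integral>\<^sup>+t. ennreal (p t) \<partial>lborel)"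
    using assms by (intro integral_eq_nn_integral) auto
  then show ?thesis using assms i unfolding is_dens_def by auto
qed

lemma real_distribution_dens:
  assumes "is_dens p" shows "real_distribution (density lborel (\<lambda>t. ennreal (p t)))"
proof -
  have "prob_space (density lborel (\<lambda>t. ennreal (p t)))"
  proof (rule prob_spaceI)
    have m: "p \<in> borel_measurable borel" using assms by (rule is_dens_borel)
    show "emeasure (density lborel (\<lambda>t. ennreal (p t))) (space (density lborel (\<lambda>t. ennreal (p t)))) = 1"
      using m by (simp add: emeasure_density is_dens_nn[OF assms])
  qed
  then show ?thesis unfolding real_distribution_def real_distribution_axioms_def by simp
qed

lemma Fc_cdf:
  assumes "is_dens p" shows "Fc p = cdf (density lborel (\<lambda>t. ennreal (p t)))"
proof
  fix y
  have m: "p \<in> borel_measurable borel" using assms by (rule is_dens_borel)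
  have ii: "integrable lborel (\<lambda>t. indicator {..y} t *\<^sub>R p t)"
    using is_densD(3)[OF assms] by (intro integrable_mult_indicator) auto
  have "emeasure (density lborel (\<lambda>t. ennreal (p t))) {..y} = (\<integral>\<^sup>+t. ennreal (p t) * indicator {..y} t \<partial>lborel)"
    using m by (subst emeasure_density) auto
  also have "\<dots> = (\<integral>\<^sup>+t. ennreal (indicator {..y} t *\<^sub>R p t) \<partial>lborel)"
    by (intro nn_integral_cong) (auto split: split_indicator)
  also have "\<dots> = ennreal (LINT t:{..y}|lborel. p t)"
    unfolding set_lebesgue_integral_def
    using ii is_densD(2)[OF assms] by (intro nn_integral_eq_integral) auto
  finally show "Fc p y = cdf (density lborel (\<lambda>t. ennreal (p t))) y"
    unfolding cdf_def Fc_def measure_def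
    by (simp add: set_lebesgue_integral_def is_densD(2)[OF assms] integral_nonneg)
qed

lemma Fc_cont:
  assumes "is_dens p" shows "isCont (Fc p) x"
proof -
  interpret real_distribution "density lborel (\<lambda>t. ennreal (p t))"
    by (rule real_distribution_dens[OF assms])
  have m: "p \<in> borel_measurable borel" using assms by (rule is_dens_borel)
  have "emeasure (density lborel (\<lambda>t. ennreal (p t))) {x} = (\<integral>\<^sup>+t. ennreal (p t) * indicator {x} t \<partial>lborel)"
    using m by (subst emeasure_density) auto
  also have "\<dots> = (\<integral>\<^sup>+t. ennreal (p x) * indicator {x} t \<partial>lborel)"
    by (intro nn_integral_cong) (auto split: split_indicator)
  also have "\<dots> = 0" by simp
  finally show ?thesis unfolding Fc_cdf[OF assms] isCont_cdf measure_def by simp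
qed

lemma Fc_mono: "is_dens p \<Longrightarrow> a \<le> b \<Longrightarrow> Fc p a \<le> Fc p b"
  using finite_borel_measure.cdf_nondecreasing[OF real_distribution.finite_borel_measure_M[OF real_distribution_dens]] Fc_cdf by metis

lemma Fc_range: "is_dens p \<Longrightarrow> Fc p a \<in> {0..1}"
  using finite_borel_measure.cdf_nonneg[OF real_distribution.finite_borel_measure_M[OF real_distribution_dens]] real_distribution.cdf_bounded_prob[OF real_distribution_dens] Fc_cdf
  by (metis atLeastAtMost_iff)

lemma Fc_top: "is_dens p \<Longrightarrow> (Fc p \<longlongrightarrow> 1) at_top"
  using real_distribution.cdf_lim_at_top_prob[OF real_distribution_dens] Fc_cdf by metis

lemma Fc_bot: "is_dens p \<Longrightarrow> (Fc p \<longlongrightarrow> 0) at_bot"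
  using finite_borel_measure.cdf_lim_at_bot[OF real_distribution.finite_borel_measure_M[OF real_distribution_dens]] Fc_cdf by metis

definition Unif :: "real measure" where "Unif = density lborel (indicator {0..1})"

lemma emeasure_Unif_Iic: "emeasure Unif {..u} = ennreal (max 0 (min 1 u))"
proof -
  have "emeasure Unif {..u} = (\<integral>\<^sup>+t. indicator {0..1} t * indicator {..u} t \<partial>lborel)"
    unfolding Unif_def by (rule emeasure_density) auto
  also have "\<dots> = (\<integral>\<^sup>+t. indicator ({0..1} \<inter> {..u}) t \<partial>lborel)"
    by (intro nn_integral_cong) (auto split: split_indicator)
  also have "\<dots> = emeasure lborel ({0..1} \<inter> {..u})" by simp
  also have "\<dots> = ennreal (max 0 (min 1 u))"
  proof (cases "u < 0")
    case True then have "{0..1} \<inter> {..u} = {}" by auto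
    then show ?thesis using True by simp
  next
    case False
    then have "{0..1} \<inter> {..u} = {0..min 1 u}" by auto
    then show ?thesis using False by simp
  qed
  finally show ?thesis .
qed

lemma real_distribution_Unif: "real_distribution Unif"
proof -
  have "prob_space Unif"
  proof (rule prob_spaceI)
    have "emeasure Unif UNIV = (\<integral>\<^sup>+t. indicator {0..1::real} t \<partial>lborel)"
      unfolding Unif_def by (subst emeasure_density) auto
    also have "\<dots> = emeasure lborel {0..1::real}" by (rule nn_integral_indicator) simp
    also have "\<dots> = 1" by simp
    finally show "emeasure Unif (space Unif) = 1" by (simp add: Unif_def)
  qed
  then show ?thesis unfolding real_distribution_def real_distribution_axioms_def Unif_def by simp
qed

lemma cdf_Unif: "cdf Unif u = max 0 (min 1 u)"
  unfolding cdf_def measure_def emeasure_Unif_Iic by (simp add: max_def)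

lemma PIT_level:
  assumes "is_dens p"
  shows "measure (density lborel (\<lambda>t. ennreal (p t))) {t. Fc p t \<le> u} = max 0 (min 1 u)"
proof -
  let ?M = "density lborel (\<lambda>t. ennreal (p t))"
  interpret real_distribution ?M by (rule real_distribution_dens[OF assms])
  have F01: "\<And>t. Fc p t \<in> {0..1}" using Fc_range[OF assms] .
  have cont: "\<And>t. isCont (Fc p) t" using Fc_cont[OF assms] .
  show ?thesis
  proof (cases "u < 0")
    case True
    then have "{t. Fc p t \<le> u} = {}" using F01 by (auto simp: not_le) (meson atLeastAtMost_iff less_le_trans not_le)
    then show ?thesis using True by simp
  next
    case u0: False
    show ?thesis
    proof (cases "u \<ge> 1")
      case True
      then have "{t. Fc p t \<le> u} = space ?M" using F01 by (auto intro: order_trans)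
      then show ?thesis using True prob_space by simp
    next
      case u1: False
      define S where "S = {t. Fc p t \<le> u}"
      show ?thesis
      proof (cases "S = {}")
        case True
        have "u = 0"
        proof (rule ccontr)
          assume "u \<noteq> 0" then have "u > 0" using u0 by simp
          then have "eventually (\<lambda>t. Fc p t < u) at_bot"
            by (rule order_tendstoD(2)[OF Fc_bot[OF assms]])
          then obtain t where "Fc p t < u" by (meson eventually_at_bot_linorder order_refl)
          then have "t \<in> S" by (simp add: S_def)
          then show False using True by simp
        qed
        then show ?thesis using True by (simp add: S_def)
      next
        case ne: False
        have "eventually (\<lambda>t. Fc p t > u) at_top"
          using Fc_top[OF assms] u1 by (intro order_tendstoD) auto
        then obtain b where b: "\<And>t. t \<ge> b \<Longrightarrow> Fc p t > u" by (auto simp: eventually_at_top_linorder)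
        have bdd: "bdd_above S"
          unfolding bdd_above_def S_def
          by (rule exI[of _ b]) (auto, meson b linorder_not_le order_less_imp_le order_le_less_trans)
        have cl: "closed S" unfolding S_def
          by (intro closed_Collect_le continuous_at_imp_continuous_on) (auto simp: cont)
        define s where "s = Sup S"
        have sS: "s \<in> S" unfolding s_def using closed_contains_Sup[OF ne bdd cl] .
        have Seq: "S = {..s}"
        proof
          show "S \<subseteq> {..s}" using cSup_upper[OF _ bdd] by (auto simp: s_def)
          show "{..s} \<subseteq> S" using sS Fc_mono[OF assms] by (auto simp: S_def intro: order_trans)
        qed
        have "Fc p s \<ge> u"
        proof (rule tendsto_lowerbound)
          show "(Fc p \<longlongrightarrow> Fc p s) (at_right s)"
            using cont[of s] by (simp add: isCont_def filterlim_at_split)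
          have "eventually (\<lambda>t. t > s) (at_right s)" by (simp add: eventually_at_right_less)
          then show "eventually (\<lambda>t. u \<le> Fc p t) (at_right s)"
          proof eventually_elim
            case (elim t)
            then have "t \<notin> S" using Seq by auto
            then show ?case by (simp add: S_def)
          qed
        qed simp
        moreover have "Fc p s \<le> u" using sS by (simp add: S_def)
        ultimately have "Fc p s = u" by simp
        moreover have "measure ?M {..s} = Fc p s" using Fc_cdf[OF assms] by (simp add: cdf_def)
        ultimately show ?thesis using Seq u0 u1 by (simp add: S_def)
      qed
    qed
  qed
qed

lemma PIT:
  assumes "is_dens p"
  shows "distr (density lborel (\<lambda>t. ennreal (p t))) borel (Fc p) = Unif"
proof -
  let ?M = "density lborel (\<lambda>t. ennreal (p t))"
  interpret real_distribution ?M by (rule real_distribution_dens[OF assms])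
  have mF: "Fc p \<in> borel_measurable borel"
    by (intro borel_measurable_continuous_onI continuous_at_imp_continuous_on) (auto simp: Fc_cont[OF assms])
  have mF': "Fc p \<in> borel_measurable ?M" using mF by (simp cong: measurable_cong_sets)
  show ?thesis
  proof (rule cdf_unique)
    show "real_distribution (distr ?M borel (Fc p))" using mF' by simp
    show "real_distribution Unif" by (rule real_distribution_Unif)
    show "cdf (distr ?M borel (Fc p)) = cdf Unif"
    proof
      fix u
      have "cdf (distr ?M borel (Fc p)) u = measure ?M (Fc p -` {..u} \<inter> space ?M)"
        unfolding cdf_def using mF' by (subst measure_distr) auto
      also have "Fc p -` {..u} \<inter> space ?M = {t. Fc p t \<le> u}" by auto
      finally show "cdf (distr ?M borel (Fc p)) u = cdf Unif u"
        using PIT_level[OF assms] cdf_Unif by simp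
    qed
  qed
qed

lemma PIT_nn:
  assumes "is_dens p" and g: "g \<in> borel_measurable borel"
  shows "(\<integral>\<^sup>+t. ennreal (p t) * g (Fc p t) \<partial>lborel) = (\<integral>\<^sup>+u. indicator {0..1} u * g u \<partial>lborel)"
proof -
  let ?M = "density lborel (\<lambda>t. ennreal (p t))"
  have mp: "p \<in> borel_measurable borel" using assms(1) by (rule is_dens_borel)
  have mF: "Fc p \<in> borel_measurable borel"
    by (intro borel_measurable_continuous_onI continuous_at_imp_continuous_on) (auto simp: Fc_cont[OF assms(1)])
  have "(\<integral>\<^sup>+t. ennreal (p t) * g (Fc p t) \<partial>lborel) = (\<integral>\<^sup>+t. g (Fc p t) \<partial>?M)"
    using mp mF g by (subst nn_integral_density) auto
  also have "\<dots> = (\<integral>\<^sup>+u. g u \<partial>distr ?M borel (Fc p))"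
    using mF g by (subst nn_integral_distr) auto
  also have "\<dots> = (\<integral>\<^sup>+u. g u \<partial>Unif)" by (simp add: PIT[OF assms(1)])
  also have "\<dots> = (\<integral>\<^sup>+u. indicator {0..1} u * g u \<partial>lborel)"
    unfolding Unif_def using g by (subst nn_integral_density) auto
  finally show ?thesis .
qed

abbreviation "phi \<equiv> std_normal_density"

lemma phi_pos: "phi x > 0" by (simp add: normal_density_pos)

lemma is_dens_phi: "is_dens phi"
  unfolding is_dens_def by (auto simp: measurable_lborel1)

lemma Phi_Fc: "Phi = Fc phi"
  by (auto simp: Phi_def Fc_def fun_eq_iff)

lemma Phi_cont: "isCont Phi x" unfolding Phi_Fc by (rule Fc_cont[OF is_dens_phi])

lemma Phi_strict: assumes "a < b" shows "Phi a < Phi b"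
proof -
  let ?M = "density lborel (\<lambda>t. ennreal (phi t))"
  interpret real_distribution ?M by (rule real_distribution_dens[OF is_dens_phi])
  define c where "c = \<bar>a\<bar> + \<bar>b\<bar>"
  have lb: "phi t \<ge> phi c" if "t \<in> {a<..b}" for t
  proof -
    have "\<bar>t\<bar> \<le> c" using that unfolding c_def by (simp add: abs_if)
    then have "\<bar>t\<bar>\<^sup>2 \<le> c\<^sup>2" by (intro power_mono) auto
    then have "t\<^sup>2 \<le> c\<^sup>2" by simp
    then have "- c\<^sup>2 / 2 \<le> - t\<^sup>2 / 2" by simp
    then have "exp (- c\<^sup>2 / 2) \<le> exp (- t\<^sup>2 / 2)" by (simp only: exp_le_cancel_iff)
    then show ?thesis unfolding std_normal_density_def by (intro mult_left_mono) auto
  qed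
  have "emeasure ?M {a<..b} = (\<integral>\<^sup>+t. ennreal (phi t) * indicator {a<..b} t \<partial>lborel)"
    by (subst emeasure_density) auto
  also have "\<dots> \<ge> (\<integral>\<^sup>+t. ennreal (phi c) * indicator {a<..b} t \<partial>lborel)"
    using lb by (intro nn_integral_mono) (auto split: split_indicator)
  also have "(\<integral>\<^sup>+t. ennreal (phi c) * indicator {a<..b} t \<partial>lborel) = ennreal (phi c) * ennreal (b - a)"
    using assms by (subst nn_integral_cmult_indicator) auto
  finally have "emeasure ?M {a<..b} \<ge> ennreal (phi c) * ennreal (b - a)" .
  then have "emeasure ?M {a<..b} \<ge> ennreal (phi c * (b - a))"
    using assms phi_pos by (simp add: ennreal_mult)
  moreover have "phi c * (b - a) > 0" using assms phi_pos by simp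
  moreover have "emeasure ?M {a<..b} = ennreal (measure ?M {a<..b})"
    by (rule emeasure_eq_ennreal_measure) simp
  ultimately have "phi c * (b - a) \<le> measure ?M {a<..b}"
    by (simp add: ennreal_le_iff)
  with \<open>phi c * (b - a) > 0\<close> have "measure ?M {a<..b} > 0" by linarith
  then show ?thesis unfolding Phi_Fc Fc_cdf[OF is_dens_phi] using cdf_diff_eq[OF assms] by simp
qed

lemma Phi_le_iff: "Phi a \<le> Phi b \<longleftrightarrow> a \<le> b"
proof
  assume "Phi a \<le> Phi b"
  show "a \<le> b"
  proof (rule ccontr)
    assume "\<not> a \<le> b"
    then have "Phi b < Phi a" by (intro Phi_strict) simp
    with \<open>Phi a \<le> Phi b\<close> show False by simp
  qed
next
  assume "a \<le> b"
  then show "Phi a \<le> Phi b" using Phi_strict[of a b] by (cases "a = b") auto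
qed

lemma Phi_inv_Phi[simp]: "Phi_inv (Phi a) = a"
  unfolding Phi_inv_def
proof (rule the_equality)
  fix z assume "Phi z = Phi a"
  then have "z \<le> a" "a \<le> z" using Phi_le_iff[of z a] Phi_le_iff[of a z] by simp_all
  then show "z = a" by simp
qed simp

lemma Phi_range: "0 < Phi a" "Phi a < 1"
proof -
  have "Phi (a - 1) < Phi a" "Phi a < Phi (a + 1)" by (simp_all add: Phi_strict)
  moreover have "Phi (a - 1) \<in> {0..1}" "Phi (a + 1) \<in> {0..1}"
    unfolding Phi_Fc by (rule Fc_range[OF is_dens_phi])+
  ultimately show "0 < Phi a" "Phi a < 1" by simp_all
qed

lemma Phi_surj: assumes "0 < u" "u < 1" shows "Phi (Phi_inv u) = u"
proof -
  have "eventually (\<lambda>t. Phi t < u) at_bot"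
    using assms by (intro order_tendstoD(2)[OF Fc_bot[OF is_dens_phi, folded Phi_Fc]])
  then obtain a where a: "Phi a < u" by (meson eventually_at_bot_linorder order_refl)
  have "eventually (\<lambda>t. Phi t > u) at_top"
    using assms by (intro order_tendstoD(1)[OF Fc_top[OF is_dens_phi, folded Phi_Fc]])
  then obtain b where b: "Phi b > u" by (meson eventually_at_top_linorder order_refl)
  have "Phi a \<le> Phi b" using a b by simp
  then have "a \<le> b" by (simp add: Phi_le_iff)
  moreover have "continuous_on {a..b} Phi"
    by (intro continuous_at_imp_continuous_on) (simp add: Phi_cont)
  ultimately obtain z where "Phi z = u"
    using IVT'[of Phi a u b] a b by auto
  then show ?thesis by auto
qed

lemma Phi_inv_le_iff: assumes "0 < u" "u < 1" shows "Phi_inv u \<le> z \<longleftrightarrow> u \<le> Phi z"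
  using Phi_le_iff[of "Phi_inv u" z] Phi_surj[OF assms] by simp

definition Pinv :: "real \<Rightarrow> real" where
  "Pinv u = (if u \<in> {0<..<1} then Phi_inv u else if u \<le> 0 then Phi_inv 0 else Phi_inv 1)"

lemma Pinv_eq: "u \<in> {0..1} \<Longrightarrow> Pinv u = Phi_inv u"
  by (auto simp: Pinv_def)

lemma Pinv_Phi[simp]: "Pinv (Phi a) = a"
  using Phi_range[of a] by (simp add: Pinv_def)

lemma measurable_Phi_inv_restr: "(\<lambda>u. if u \<in> {0<..<1} then Phi_inv u else 0) \<in> borel_measurable borel"
proof (rule borel_measurable_iff_le[THEN iffD2], intro allI)
  fix z
  have "{w \<in> space borel. (if w \<in> {0<..<1} then Phi_inv w else 0) \<le> z} =
     ({0<..<1} \<inter> {..Phi z}) \<union> (if 0 \<le> z then - {0<..<1} else {})"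
  proof (intro set_eqI iffI)
    fix w assume "w \<in> {w \<in> space borel. (if w \<in> {0<..<1} then Phi_inv w else 0) \<le> z}"
    then show "w \<in> ({0<..<1} \<inter> {..Phi z}) \<union> (if 0 \<le> z then - {0<..<1} else {})"
      using Phi_inv_le_iff[of w z] by (cases "w \<in> {0<..<1}") auto
  next
    fix w assume "w \<in> ({0<..<1} \<inter> {..Phi z}) \<union> (if 0 \<le> z then - {0<..<1} else {})"
    then show "w \<in> {w \<in> space borel. (if w \<in> {0<..<1} then Phi_inv w else 0) \<le> z}"
      using Phi_inv_le_iff[of w z] by (cases "w \<in> {0<..<1}"; cases "0 \<le> z") auto
  qed
  then show "{w \<in> space borel. (if w \<in> {0<..<1} then Phi_inv w else 0) \<le> z} \<in> sets borel"
    by simp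
qed

lemma measurable_Pinv[measurable]: "Pinv \<in> borel_measurable borel"
proof -
  have "Pinv = (\<lambda>u. if u \<in> {0<..<1} then (if u \<in> {0<..<1} then Phi_inv u else 0) else if u \<le> 0 then Phi_inv 0 else Phi_inv 1)"
    by (auto simp: Pinv_def fun_eq_iff)
  also have "\<dots> \<in> borel_measurable borel"
    using measurable_Phi_inv_restr by measurable
  finally show ?thesis .
qed

definition gcm :: "real \<Rightarrow> real \<Rightarrow> real \<Rightarrow> real" where
  "gcm \<rho> u v = bvn_density \<rho> (Pinv u) (Pinv v) / (phi (Pinv u) * phi (Pinv v))"

lemma gcm_eq: "u \<in> {0..1} \<Longrightarrow> v \<in> {0..1} \<Longrightarrow> gauss_copula \<rho> u v = gcm \<rho> u v"
  by (simp add: gauss_copula_def gcm_def Pinv_eq)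

lemma measurable_bvn[measurable (raw)]:
  assumes [measurable]: "f \<in> borel_measurable M" "g \<in> borel_measurable M"
  shows "(\<lambda>x. bvn_density \<rho> (f x) (g x)) \<in> borel_measurable M"
  unfolding bvn_density_def by measurable

lemma measurable_gcm'[measurable (raw)]:
  assumes [measurable]: "f \<in> borel_measurable M" "g \<in> borel_measurable M"
  shows "(\<lambda>x. gcm \<rho> (f x) (g x)) \<in> borel_measurable M"
  unfolding gcm_def by measurable

lemma measurable_gcm_fst: "(\<lambda>u. gcm \<rho> u v) \<in> borel_measurable borel"
  by measurable

lemma bvn_nonneg: assumes "\<bar>\<rho>\<bar> < 1" shows "bvn_density \<rho> a b \<ge> 0"
proof -
  have "\<rho>\<^sup>2 < 1" using assms by (simp only: abs_square_less_1)
  then show ?thesis unfolding bvn_density_def by simp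
qed

lemma gcm_nonneg: "\<bar>\<rho>\<bar> < 1 \<Longrightarrow> gcm \<rho> u v \<ge> 0"
  unfolding gcm_def using bvn_nonneg phi_pos by (simp add: less_le)

lemma gc_nonneg: "\<bar>\<rho>\<bar> < 1 \<Longrightarrow> gauss_copula \<rho> u v \<ge> 0"
  unfolding gauss_copula_def using bvn_nonneg phi_pos by (simp add: less_le)

lemma bvn_sym: "bvn_density \<rho> a b = bvn_density \<rho> b a"
  unfolding bvn_density_def by (simp add: algebra_simps)

lemma gcm_sym: "gcm \<rho> u v = gcm \<rho> v u"
  unfolding gcm_def by (simp add: bvn_sym mult.commute)

lemma exponent_id:
  fixes \<rho> a b :: real
  assumes "\<bar>\<rho>\<bar> < 1"
  shows "- b\<^sup>2 / 2 - (a - \<rho> * b)\<^sup>2 / (2 * (1 - \<rho>\<^sup>2)) = - (a\<^sup>2 - 2 * \<rho> * a * b + b\<^sup>2) / (2 * (1 - \<rho>\<^sup>2))"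
proof -
  have "\<rho>\<^sup>2 < 1" using assms by (simp only: abs_square_less_1)
  then have d: "2 * (1 - \<rho>\<^sup>2) \<noteq> 0" by simp
  have e1: "- b\<^sup>2 / 2 = (- b\<^sup>2 * (1 - \<rho>\<^sup>2)) / (2 * (1 - \<rho>\<^sup>2))"
    using d by (metis mult.commute nonzero_mult_divide_mult_cancel_right mult_eq_0_iff)
  have "- b\<^sup>2 / 2 - (a - \<rho> * b)\<^sup>2 / (2 * (1 - \<rho>\<^sup>2)) = (- b\<^sup>2 * (1 - \<rho>\<^sup>2) - (a - \<rho> * b)\<^sup>2) / (2 * (1 - \<rho>\<^sup>2))"
    unfolding e1 by (rule diff_divide_distrib[symmetric])
  also have "- b\<^sup>2 * (1 - \<rho>\<^sup>2) - (a - \<rho> * b)\<^sup>2 = - (a\<^sup>2 - 2 * \<rho> * a * b + b\<^sup>2)"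
    by (simp add: power2_eq_square algebra_simps)
  finally show ?thesis .
qed

lemma bvn_factor:
  assumes "\<bar>\<rho>\<bar> < 1"
  shows "bvn_density \<rho> a b = phi b * normal_density (\<rho> * b) (sqrt (1 - \<rho>\<^sup>2)) a"
proof -
  have r: "\<rho>\<^sup>2 < 1" using assms by (simp only: abs_square_less_1)
  have s2: "(sqrt (1 - \<rho>\<^sup>2))\<^sup>2 = 1 - \<rho>\<^sup>2" using r by simp
  have d: "1 / sqrt (2 * pi) * (1 / sqrt (2 * pi * (1 - \<rho>\<^sup>2))) = 1 / (2 * pi * sqrt (1 - \<rho>\<^sup>2))"
  proof -
    have "sqrt (2 * pi * (1 - \<rho>\<^sup>2)) = sqrt (2 * pi) * sqrt (1 - \<rho>\<^sup>2)" by (rule real_sqrt_mult)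
    moreover have "sqrt (2 * pi) * sqrt (2 * pi) = 2 * pi" by simp
    ultimately have "sqrt (2 * pi) * sqrt (2 * pi * (1 - \<rho>\<^sup>2)) = 2 * pi * sqrt (1 - \<rho>\<^sup>2)"
      by (metis mult.assoc)
    then show ?thesis unfolding times_divide_times_eq by simp
  qed
  have "phi b * normal_density (\<rho> * b) (sqrt (1 - \<rho>\<^sup>2)) a =
     (1 / sqrt (2 * pi) * (1 / sqrt (2 * pi * (1 - \<rho>\<^sup>2)))) * (exp (- b\<^sup>2 / 2) * exp (- (a - \<rho> * b)\<^sup>2 / (2 * (1 - \<rho>\<^sup>2))))"
    unfolding std_normal_density_def unfolding normal_density_def s2 by (simp only: mult.assoc mult.commute mult.left_commute)
  also have "\<dots> = exp (- b\<^sup>2 / 2 - (a - \<rho> * b)\<^sup>2 / (2 * (1 - \<rho>\<^sup>2))) / (2 * pi * sqrt (1 - \<rho>\<^sup>2))"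
  proof -
    have "- b\<^sup>2 / 2 + - (a - \<rho> * b)\<^sup>2 / (2 * (1 - \<rho>\<^sup>2)) = - b\<^sup>2 / 2 - (a - \<rho> * b)\<^sup>2 / (2 * (1 - \<rho>\<^sup>2))"
      by simp
    then show ?thesis unfolding d exp_add[symmetric] by simp
  qed
  also have "\<dots> = bvn_density \<rho> a b"
    unfolding exponent_id[OF assms] bvn_density_def ..
  finally show ?thesis ..
qed

lemma nn_integral_bvn:
  assumes "\<bar>\<rho>\<bar> < 1"
  shows "(\<integral>\<^sup>+a. ennreal (bvn_density \<rho> a b) \<partial>lborel) = ennreal (phi b)"
proof -
  have r: "\<rho>\<^sup>2 < 1" using assms by (simp only: abs_square_less_1)
  have "(\<integral>\<^sup>+a. ennreal (bvn_density \<rho> a b) \<partial>lborel) =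
        (\<integral>\<^sup>+a. ennreal (phi b) * ennreal (normal_density (\<rho> * b) (sqrt (1 - \<rho>\<^sup>2)) a) \<partial>lborel)"
    by (simp add: bvn_factor[OF assms] ennreal_mult)
  also have "\<dots> = ennreal (phi b) * (\<integral>\<^sup>+a. ennreal (normal_density (\<rho> * b) (sqrt (1 - \<rho>\<^sup>2)) a) \<partial>lborel)"
    by (rule nn_integral_cmult) simp
  also have "(\<integral>\<^sup>+a. ennreal (normal_density (\<rho> * b) (sqrt (1 - \<rho>\<^sup>2)) a) \<partial>lborel) = 1"
  proof -
    have sp: "sqrt (1 - \<rho>\<^sup>2) > 0" using r by simp
    show ?thesis
      using integrable_normal_density[OF sp] integral_normal_density[OF sp]
      by (subst nn_integral_eq_integral) auto
  qed
  finally show ?thesis by simp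
qed

lemma copula_integral1:
  assumes "\<bar>\<rho>\<bar> < 1"
  shows "(\<integral>\<^sup>+u. indicator {0..1} u * ennreal (gcm \<rho> u v) \<partial>lborel) = 1"
proof -
  have "(\<integral>\<^sup>+u. indicator {0..1} u * ennreal (gcm \<rho> u v) \<partial>lborel) =
        (\<integral>\<^sup>+t. ennreal (phi t) * ennreal (gcm \<rho> (Fc phi t) v) \<partial>lborel)"
    by (rule PIT_nn[OF is_dens_phi, symmetric]) measurable
  also have "\<dots> = (\<integral>\<^sup>+t. ennreal (bvn_density \<rho> t (Pinv v)) * ennreal (1 / phi (Pinv v)) \<partial>lborel)"
  proof (intro nn_integral_cong)
    fix t
    have "phi t * gcm \<rho> (Fc phi t) v = bvn_density \<rho> t (Pinv v) * (1 / phi (Pinv v))"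
      unfolding Phi_Fc[symmetric] gcm_def using phi_pos[of t] by simp
    then show "ennreal (phi t) * ennreal (gcm \<rho> (Fc phi t) v) = ennreal (bvn_density \<rho> t (Pinv v)) * ennreal (1 / phi (Pinv v))"
      using phi_pos[of t] phi_pos[of "Pinv v"] gcm_nonneg[OF assms] bvn_nonneg[OF assms]
      by (simp add: ennreal_mult[symmetric] less_imp_le)
  qed
  also have "\<dots> = (\<integral>\<^sup>+t. ennreal (bvn_density \<rho> t (Pinv v)) \<partial>lborel) * ennreal (1 / phi (Pinv v))"
    by (rule nn_integral_multc) (simp add: measurable_lborel1)
  also have "\<dots> = 1"
    using phi_pos[of "Pinv v"] by (simp add: nn_integral_bvn[OF assms] ennreal_mult[symmetric])
  finally show ?thesis .
qed

lemma copula_integral2: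
  assumes "\<bar>\<rho>\<bar> < 1"
  shows "(\<integral>\<^sup>+v. indicator {0..1} v * ennreal (gcm \<rho> u v) \<partial>lborel) = 1"
  using copula_integral1[OF assms, of u] by (simp add: gcm_sym)

lemma gc_Phi_formula:
  assumes "\<bar>\<rho>\<bar> < 1"
  shows "gauss_copula \<rho> (Phi a) (Phi b) = exp (a\<^sup>2 / 2 - (a - \<rho> * b)\<^sup>2 / (2 * (1 - \<rho>\<^sup>2))) / sqrt (1 - \<rho>\<^sup>2)"
proof -
  define Q where "Q = (a - \<rho> * b)\<^sup>2 / (2 * (1 - \<rho>\<^sup>2))"
  define s where "s = sqrt (1 - \<rho>\<^sup>2)"
  define c where "c = 1 / sqrt (2 * pi)"
  have arg: "- a\<^sup>2 / 2 + - b\<^sup>2 / 2 + (a\<^sup>2 / 2 - Q) = - b\<^sup>2 / 2 - Q" by linarith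
  have e: "exp (- a\<^sup>2 / 2) * exp (- b\<^sup>2 / 2) * exp (a\<^sup>2 / 2 - Q) = exp (- b\<^sup>2 / 2 - Q)"
    by (simp only: exp_add[symmetric] arg)
  have cc: "c * c = 1 / (2 * pi)" unfolding c_def by simp
  have "phi a * phi b * (exp (a\<^sup>2 / 2 - Q) / s) = (c * c) * (exp (- a\<^sup>2 / 2) * exp (- b\<^sup>2 / 2) * exp (a\<^sup>2 / 2 - Q)) / s"
    unfolding std_normal_density_def c_def by (simp add: ac_simps)
  also have "\<dots> = exp (- b\<^sup>2 / 2 - Q) / (2 * pi * s)" unfolding e cc by simp
  also have "\<dots> = bvn_density \<rho> a b"
    unfolding Q_def s_def exponent_id[OF assms] bvn_density_def ..
  finally have "bvn_density \<rho> a b = phi a * phi b * (exp (a\<^sup>2 / 2 - Q) / s)" ..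
  then show ?thesis unfolding gauss_copula_def Phi_inv_Phi Q_def s_def using phi_pos[of a] phi_pos[of b] by simp
qed

lemma gc_Phi_bound:
  assumes "\<bar>\<rho>\<bar> < 1"
  shows "gauss_copula \<rho> (Phi a) (Phi b) \<le> exp (a\<^sup>2 / 2) / sqrt (1 - \<rho>\<^sup>2)"
proof -
  have r: "\<rho>\<^sup>2 < 1" using assms by (simp only: abs_square_less_1)
  have "(a - \<rho> * b)\<^sup>2 / (2 * (1 - \<rho>\<^sup>2)) \<ge> 0" using r by simp
  then show ?thesis unfolding gc_Phi_formula[OF assms] using r
    by (intro divide_right_mono) auto
qed

lemma alpha_pos: assumes "i \<ge> 1" shows "alpha i > 0"
proof -
  have i: "real i \<ge> 1" using assms by simp
  then have "1 / real i \<le> 1" by simp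
  then have "2 - 1 / real i > 0" by simp
  moreover have "real i + 1 > 0" by simp
  ultimately show ?thesis unfolding alpha_def by (rule divide_pos_pos)
qed

lemma alpha_le_half: assumes "i \<ge> 1" shows "alpha i \<le> 1 / 2"
proof -
  have i: "real i \<ge> 1" using assms by simp
  have "(real i - 1) * (real i - 2) \<ge> 0 \<or> i = 1"
  proof (cases "i \<ge> 2")
    case True then show ?thesis by simp
  qed (use assms in auto)
  then have "4 * real i - 2 \<le> real i * real i + real i"
    by (auto simp: algebra_simps)
  then show ?thesis using i unfolding alpha_def by (simp add: field_simps)
qed

definition Cb :: "('d::finite \<Rightarrow> real) \<Rightarrow> real^'d \<Rightarrow> real" where
  "Cb \<rho>x x = (\<Prod>j\<in>UNIV. exp ((x $ j)\<^sup>2 / 2) / sqrt (1 - (\<rho>x j)\<^sup>2))"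

lemma Cb_pos: assumes "\<And>j. 0 < \<rho>x j \<and> \<rho>x j < 1" shows "Cb \<rho>x x > 0"
proof -
  have "\<And>j. (\<rho>x j)\<^sup>2 < 1" using assms by (metis abs_of_pos abs_square_less_1)
  then show ?thesis unfolding Cb_def by (intro prod_pos) auto
qed

lemma copprod_bounds:
  assumes "\<And>j. 0 < \<rho>x j \<and> \<rho>x j < 1"
  shows "(\<Prod>j\<in>UNIV. gauss_copula (\<rho>x j) (Phi (x $ j)) (Phi (x' $ j))) \<ge> 0"
    "(\<Prod>j\<in>UNIV. gauss_copula (\<rho>x j) (Phi (x $ j)) (Phi (x' $ j))) \<le> Cb \<rho>x x"
proof -
  have r: "\<And>j. \<bar>\<rho>x j\<bar> < 1" using assms by (metis abs_of_pos)
  show "(\<Prod>j\<in>UNIV. gauss_copula (\<rho>x j) (Phi (x $ j)) (Phi (x' $ j))) \<ge> 0"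
    using gc_nonneg[OF r] by (intro prod_nonneg) auto
  show "(\<Prod>j\<in>UNIV. gauss_copula (\<rho>x j) (Phi (x $ j)) (Phi (x' $ j))) \<le> Cb \<rho>x x"
    unfolding Cb_def using gc_nonneg[OF r] gc_Phi_bound[OF r] by (intro prod_mono) auto
qed

lemma alpha_x_bounds:
  assumes "\<And>j. 0 < \<rho>x j \<and> \<rho>x j < 1" "i \<ge> 1"
  shows "0 \<le> alpha_x i \<rho>x x x'" "alpha_x i \<rho>x x x' \<le> 1"
    "alpha_x i \<rho>x x x' \<le> 2 * Cb \<rho>x x * alpha i"
proof -
  define c where "c = (\<Prod>j\<in>UNIV. gauss_copula (\<rho>x j) (Phi (x $ j)) (Phi (x' $ j)))"
  have c0: "c \<ge> 0" and cb: "c \<le> Cb \<rho>x x" using copprod_bounds[OF assms(1)] by (auto simp: c_def)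
  have a0: "alpha i > 0" and ah: "alpha i \<le> 1/2" using alpha_pos alpha_le_half assms(2) by auto
  have ac0: "alpha i * c \<ge> 0" using a0 c0 by simp
  have den: "1 - alpha i + alpha i * c \<ge> 1/2" using ah ac0 by linarith
  have ax: "alpha_x i \<rho>x x x' = alpha i * c / (1 - alpha i + alpha i * c)"
    unfolding alpha_x_def c_def Let_def ..
  show "0 \<le> alpha_x i \<rho>x x x'" unfolding ax using ac0 den by simp
  show "alpha_x i \<rho>x x x' \<le> 1" unfolding ax using ac0 den ah by (simp add: divide_le_eq_1)
  have "alpha i * c / (1 - alpha i + alpha i * c) \<le> alpha i * c / (1/2)"
    using ac0 den by (intro divide_left_mono) auto
  also have "\<dots> = 2 * c * alpha i" by simp
  also have "\<dots> \<le> 2 * Cb \<rho>x x * alpha i" using cb a0 by simp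
  finally show "alpha_x i \<rho>x x x' \<le> 2 * Cb \<rho>x x * alpha i" unfolding ax .
qed

lemma pcdf_Fc: "pcdf p0 \<rho>y \<rho>x n k \<omega> x y = Fc (pdens p0 \<rho>y \<rho>x n k \<omega> x) y"
  unfolding pcdf_def Fc_def ..

lemma pdens_Suc_alt:
  "pdens p0 \<rho>y \<rho>x n (Suc k) \<omega> x y =
     (1 - alpha_x (n + k + 1) \<rho>x x (fst (\<omega> k)) + alpha_x (n + k + 1) \<rho>x x (fst (\<omega> k)) *
        gauss_copula \<rho>y (pcdf p0 \<rho>y \<rho>x n k \<omega> x y) (pcdf p0 \<rho>y \<rho>x n k \<omega> (fst (\<omega> k)) (snd (\<omega> k))))
     * pdens p0 \<rho>y \<rho>x n k \<omega> x y"
  unfolding pcdf_def by (simp add: Let_def)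

lemma update_dens:
  assumes p: "is_dens p" and a: "0 \<le> a" "a \<le> 1" and r: "\<bar>\<rho>\<bar> < 1"
  shows "is_dens (\<lambda>y. (1 - a + a * gcm \<rho> (Fc p y) v) * p y)"
proof (rule is_densI_nn)
  have mF: "Fc p \<in> borel_measurable borel"
    by (intro borel_measurable_continuous_onI continuous_at_imp_continuous_on) (auto simp: Fc_cont[OF p])
  have mp: "p \<in> borel_measurable borel" using p by (rule is_dens_borel)
  show "(\<lambda>y. (1 - a + a * gcm \<rho> (Fc p y) v) * p y) \<in> borel_measurable borel"
    using mF mp by measurable
  have g0: "\<And>y. gcm \<rho> (Fc p y) v \<ge> 0" using gcm_nonneg[OF r] .
  have p0: "\<And>y. p y \<ge> 0" using is_densD(2)[OF p] .
  show "\<And>y. 0 \<le> (1 - a + a * gcm \<rho> (Fc p y) v) * p y"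
    using g0 p0 a by (simp add: mult_nonneg_nonneg)
  have "(\<integral>\<^sup>+y. ennreal ((1 - a + a * gcm \<rho> (Fc p y) v) * p y) \<partial>lborel) =
        (\<integral>\<^sup>+y. ennreal (1 - a) * ennreal (p y) + ennreal a * (ennreal (p y) * ennreal (gcm \<rho> (Fc p y) v)) \<partial>lborel)"
  proof (intro nn_integral_cong)
    fix y
    have "(1 - a + a * gcm \<rho> (Fc p y) v) * p y = (1 - a) * p y + a * (p y * gcm \<rho> (Fc p y) v)"
      by (simp add: algebra_simps)
    moreover have "ennreal ((1 - a) * p y + a * (p y * gcm \<rho> (Fc p y) v)) = ennreal ((1 - a) * p y) + ennreal (a * (p y * gcm \<rho> (Fc p y) v))"
      using g0[of y] p0[of y] a by (intro ennreal_plus) auto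
    moreover have "ennreal ((1 - a) * p y) = ennreal (1 - a) * ennreal (p y)"
      using p0[of y] a by (intro ennreal_mult) auto
    moreover have "ennreal (a * (p y * gcm \<rho> (Fc p y) v)) = ennreal a * (ennreal (p y) * ennreal (gcm \<rho> (Fc p y) v))"
      using g0[of y] p0[of y] a by (simp add: ennreal_mult)
    ultimately show "ennreal ((1 - a + a * gcm \<rho> (Fc p y) v) * p y) = ennreal (1 - a) * ennreal (p y) + ennreal a * (ennreal (p y) * ennreal (gcm \<rho> (Fc p y) v))"
      by simp
  qed
  also have "\<dots> = ennreal (1 - a) * (\<integral>\<^sup>+y. ennreal (p y) \<partial>lborel) + ennreal a * (\<integral>\<^sup>+y. ennreal (p y) * ennreal (gcm \<rho> (Fc p y) v) \<partial>lborel)"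
    using mF mp by (simp add: nn_integral_add nn_integral_cmult)
  also have "(\<integral>\<^sup>+y. ennreal (p y) * ennreal (gcm \<rho> (Fc p y) v) \<partial>lborel) = 1"
    using PIT_nn[OF p, of "\<lambda>u. ennreal (gcm \<rho> u v)"] copula_integral1[OF r, of v] by simp
  moreover have "ennreal (1 - a) + ennreal a = 1" using ennreal_plus[of "1 - a" a] a by simp
  ultimately show "(\<integral>\<^sup>+y. ennreal ((1 - a + a * gcm \<rho> (Fc p y) v) * p y) \<partial>lborel) = 1"
    using is_dens_nn[OF p] by simp
qed

lemma dens_all:
  assumes p0: "\<And>x'. is_dens (p0 x')" and ry: "0 < \<rho>y" "\<rho>y < 1" and rx: "\<And>j. 0 < \<rho>x j \<and> \<rho>x j < 1"
  shows "is_dens (pdens p0 \<rho>y \<rho>x n k \<omega> x')"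
proof (induction k arbitrary: x')
  case 0 then show ?case using p0 by simp
next
  case (Suc k)
  define a where "a = alpha_x (n + k + 1) \<rho>x x' (fst (\<omega> k))"
  define r where "r = pcdf p0 \<rho>y \<rho>x n k \<omega> (fst (\<omega> k)) (snd (\<omega> k))"
  have r01: "r \<in> {0..1}" unfolding r_def pcdf_Fc by (rule Fc_range[OF Suc.IH])
  have a01: "0 \<le> a" "a \<le> 1" unfolding a_def using alpha_x_bounds[where \<rho>x=\<rho>x and i="n + k + 1" and x=x' and x'="fst (\<omega> k)"] rx by auto
  have ryy: "\<bar>\<rho>y\<bar> < 1" using ry by simp
  have eq: "pdens p0 \<rho>y \<rho>x n (Suc k) \<omega> x' = (\<lambda>y. (1 - a + a * gcm \<rho>y (Fc (pdens p0 \<rho>y \<rho>x n k \<omega> x') y) r) * pdens p0 \<rho>y \<rho>x n k \<omega> x' y)"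
  proof
    fix y
    show "pdens p0 \<rho>y \<rho>x n (Suc k) \<omega> x' y = (1 - a + a * gcm \<rho>y (Fc (pdens p0 \<rho>y \<rho>x n k \<omega> x') y) r) * pdens p0 \<rho>y \<rho>x n k \<omega> x' y"
      unfolding pdens_Suc_alt a_def[symmetric] r_def[symmetric]
      using gcm_eq[OF Fc_range[OF Suc.IH] r01] by (simp add: pcdf_Fc)
  qed
  show ?case unfolding eq by (rule update_dens[OF Suc.IH a01 ryy])
qed

lemma meas_vec_nth[measurable]: "(\<lambda>x::real^'d. x $ j) \<in> borel_measurable borel"
  by (intro borel_measurable_continuous_onI continuous_intros)

lemma meas_Phi[measurable]: "Phi \<in> borel_measurable borel"
  by (intro borel_measurable_continuous_onI continuous_at_imp_continuous_on) (simp add: Phi_cont)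

lemma meas_path_comp[measurable]: "(\<lambda>\<omega>. \<omega> k) \<in> path_space \<rightarrow>\<^sub>M borel"
  unfolding path_space_def by measurable

lemma meas_fst_borel[measurable]: "fst \<in> (borel :: ('a::second_countable_topology \<times> 'b::second_countable_topology) measure) \<rightarrow>\<^sub>M borel"
  unfolding borel_prod[symmetric] by simp

lemma meas_snd_borel[measurable]: "snd \<in> (borel :: ('a::second_countable_topology \<times> 'b::second_countable_topology) measure) \<rightarrow>\<^sub>M borel"
  unfolding borel_prod[symmetric] by simp

lemma gc_Phi_eq: "gauss_copula \<rho> (Phi a) (Phi b) = gcm \<rho> (Phi a) (Phi b)"
  using Phi_range[of a] Phi_range[of b] by (intro gcm_eq) auto

lemma alpha_x_gcm: "alpha_x i \<rho>x x x' =
   alpha i * (\<Prod>j\<in>UNIV. gcm (\<rho>x j) (Phi (x $ j)) (Phi (x' $ j))) /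
     (1 - alpha i + alpha i * (\<Prod>j\<in>UNIV. gcm (\<rho>x j) (Phi (x $ j)) (Phi (x' $ j))))"
  unfolding alpha_x_def Let_def gc_Phi_eq ..

lemma meas_alpha_x[measurable (raw)]:
  assumes [measurable]: "f \<in> borel_measurable M" "g \<in> borel_measurable M"
  shows "(\<lambda>w. alpha_x i \<rho>x (f w) (g w)) \<in> borel_measurable M"
  unfolding alpha_x_gcm by measurable

locale prmodel =
  fixes p0 :: "real^'d::finite \<Rightarrow> real \<Rightarrow> real" and \<rho>y :: real and \<rho>x :: "'d \<Rightarrow> real" and n :: nat
  assumes dens0: "\<And>x'. is_dens (p0 x')"
    and joint: "(\<lambda>z. p0 (fst z) (snd z)) \<in> borel_measurable (borel \<Otimes>\<^sub>M borel)"
    and ry: "0 < \<rho>y" "\<rho>y < 1"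
    and rx: "\<And>j. 0 < \<rho>x j \<and> \<rho>x j < 1"
    and n1: "n \<ge> 1"
begin

abbreviation "pd \<equiv> pdens p0 \<rho>y \<rho>x n"
abbreviation "pc \<equiv> pcdf p0 \<rho>y \<rho>x n"

lemma ryy: "\<bar>\<rho>y\<bar> < 1" using ry by simp

lemma dens: "is_dens (pd k \<omega> x')"
  by (rule dens_all[OF dens0 ry rx])

lemma pc_range: "pc k \<omega> x y \<in> {0..1}"
  unfolding pcdf_Fc by (rule Fc_range[OF dens])

lemma pd_nonneg: "pd k \<omega> x y \<ge> 0" using is_densD(2)[OF dens] .

lemma pd_Suc:
  "pd (Suc k) \<omega> x y =
     (1 - alpha_x (n + k + 1) \<rho>x x (fst (\<omega> k)) + alpha_x (n + k + 1) \<rho>x x (fst (\<omega> k)) *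
        gcm \<rho>y (pc k \<omega> x y) (pc k \<omega> (fst (\<omega> k)) (snd (\<omega> k))))
     * pd k \<omega> x y"
  unfolding pdens_Suc_alt using gcm_eq[OF pc_range pc_range] by simp

lemma meas_p0[measurable (raw)]:
  assumes [measurable]: "g \<in> borel_measurable M" "h \<in> borel_measurable M"
  shows "(\<lambda>w. p0 (g w) (h w)) \<in> borel_measurable M"
  using measurable_compose[OF measurable_Pair[OF assms] joint] by simp

lemma pc_integral: "pc k \<omega> x y = (\<integral>t. (if t \<le> y then pd k \<omega> x t else 0) \<partial>lborel)"
  unfolding pcdf_def set_lebesgue_integral_def by (intro Bochner_Integration.integral_cong) (auto split: split_indicator)

abbreviation "TT \<equiv> (path_space \<Otimes>\<^sub>M (borel \<Otimes>\<^sub>M borel) :: ((nat \<Rightarrow> (real^'d) \<times> real) \<times> ((real^'d) \<times> real)) measure)"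

definition PD :: "nat \<Rightarrow> bool" where
  "PD k \<longleftrightarrow> (\<lambda>z. pd k (fst z) (fst (snd z)) (snd (snd z))) \<in> borel_measurable TT"
definition PC :: "nat \<Rightarrow> bool" where
  "PC k \<longleftrightarrow> (\<lambda>z. pc k (fst z) (fst (snd z)) (snd (snd z))) \<in> borel_measurable TT"

lemma PD_comp:
  assumes "PD k" and [measurable]: "f \<in> M \<rightarrow>\<^sub>M path_space" "g \<in> borel_measurable M" "h \<in> borel_measurable M"
  shows "(\<lambda>w. pd k (f w) (g w) (h w)) \<in> borel_measurable M"
proof -
  have "(\<lambda>w. (f w, (g w, h w))) \<in> M \<rightarrow>\<^sub>M TT" by measurable
  from measurable_compose[OF this assms(1)[unfolded PD_def]] show ?thesis by simp
qed

lemma PC_comp: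
  assumes "PC k" and [measurable]: "f \<in> M \<rightarrow>\<^sub>M path_space" "g \<in> borel_measurable M" "h \<in> borel_measurable M"
  shows "(\<lambda>w. pc k (f w) (g w) (h w)) \<in> borel_measurable M"
proof -
  have "(\<lambda>w. (f w, (g w, h w))) \<in> M \<rightarrow>\<^sub>M TT" by measurable
  from measurable_compose[OF this assms(1)[unfolded PC_def]] show ?thesis by simp
qed

lemma PD_PC: assumes "PD k" shows "PC k"
proof -
  have [measurable]: "(\<lambda>w. pd k (fst (fst w)) (fst (snd (fst w))) (snd w)) \<in> borel_measurable (TT \<Otimes>\<^sub>M lborel)"
    by (rule PD_comp[OF assms]) measurable
  show ?thesis unfolding PC_def pc_integral by measurable
qed

lemma PD_Suc: assumes "PD k" shows "PD (Suc k)"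
proof -
  have pc: "PC k" by (rule PD_PC[OF assms])
  have [measurable]: "(\<lambda>z. pd k (fst z) (fst (snd z)) (snd (snd z))) \<in> borel_measurable TT"
    using assms unfolding PD_def .
  have [measurable]: "(\<lambda>z. pc k (fst z) (fst (snd z)) (snd (snd z))) \<in> borel_measurable TT"
    using pc unfolding PC_def .
  have [measurable]: "(\<lambda>z. pc k (fst z) (fst (fst z k)) (snd (fst z k))) \<in> borel_measurable TT"
    by (rule PC_comp[OF pc]) measurable
  show ?thesis unfolding PD_def pd_Suc by measurable
qed

lemma PD_all: "PD k"
proof (induction k)
  case 0
  show ?case unfolding PD_def by simp measurable
next
  case (Suc k) then show ?case by (rule PD_Suc)
qed

lemma meas_pd[measurable (raw)]:
  assumes [measurable]: "f \<in> M \<rightarrow>\<^sub>M path_space" "g \<in> borel_measurable M" "h \<in> borel_measurable M"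
  shows "(\<lambda>w. pd k (f w) (g w) (h w)) \<in> borel_measurable M"
  by (rule PD_comp[OF PD_all]) measurable

lemma meas_pc[measurable (raw)]:
  assumes [measurable]: "f \<in> M \<rightarrow>\<^sub>M path_space" "g \<in> borel_measurable M" "h \<in> borel_measurable M"
  shows "(\<lambda>w. pc k (f w) (g w) (h w)) \<in> borel_measurable M"
  by (rule PC_comp[OF PD_PC[OF PD_all]]) measurable

end

lemma meas_upd[measurable (raw)]:
  assumes [measurable]: "f \<in> M \<rightarrow>\<^sub>M path_space" "g \<in> M \<rightarrow>\<^sub>M borel"
  shows "(\<lambda>w. (f w)(k := g w)) \<in> M \<rightarrow>\<^sub>M path_space"
proof -
  have "(\<lambda>w i. if i = k then g w else f w i) \<in> M \<rightarrow>\<^sub>M path_space"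
    unfolding path_space_def
  proof (rule measurable_PiM_single')
    fix i :: nat
    have [measurable]: "(\<lambda>w. f w i) \<in> M \<rightarrow>\<^sub>M borel"
      using measurable_compose[OF assms(1) meas_path_comp[of i]] .
    show "(\<lambda>w. if i = k then g w else f w i) \<in> M \<rightarrow>\<^sub>M borel" by (cases "i = k") simp_all
  qed auto
  then show ?thesis by (simp add: fun_upd_def)
qed

lemma space_path_space[simp]: "space path_space = UNIV"
  unfolding path_space_def by (simp add: space_PiM)

locale prmodel_xs = prmodel p0 \<rho>y \<rho>x n for p0 :: "real^'d::finite \<Rightarrow> real \<Rightarrow> real" and \<rho>y \<rho>x n +
  fixes xs :: "nat \<Rightarrow> real^'d"
begin

definition Xj :: "nat \<Rightarrow> (nat \<Rightarrow> (real^'d) \<times> real) \<Rightarrow> real^'d" where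
  "Xj j \<omega> = (if j < n then xs j else fst (\<omega> (j - n)))"

lemma meas_Xj[measurable]: "Xj j \<in> path_space \<rightarrow>\<^sub>M borel"
  unfolding Xj_def by (cases "j < n") simp_all

abbreviation "st \<equiv> step p0 \<rho>y \<rho>x n xs"
abbreviation "lw \<equiv> law p0 \<rho>y \<rho>x n xs"

definition kj :: "nat \<Rightarrow> (nat \<Rightarrow> (real^'d) \<times> real) \<Rightarrow> nat \<Rightarrow> ((real^'d) \<times> real) measure" where
  "kj k \<omega> j = distr (density lborel (\<lambda>y. ennreal (pd k \<omega> (Xj j \<omega>) y))) borel (\<lambda>y. (Xj j \<omega>, y))"

lemma st_eq: "st k \<omega> = bind (uniform_count_measure {..<n + k}) (kj k \<omega>)"
  unfolding step_def kj_def Xj_def Let_def ..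

lemma kj_prob: "prob_space (kj k \<omega> j)"
proof -
  interpret real_distribution "density lborel (\<lambda>y. ennreal (pd k \<omega> (Xj j \<omega>) y))"
    by (rule real_distribution_dens[OF dens])
  show ?thesis unfolding kj_def by (intro prob_space_distr) simp
qed

lemma sets_kj[simp]: "sets (kj k \<omega> j) = sets borel"
  unfolding kj_def by simp

lemma kj_meas: "kj k \<omega> \<in> uniform_count_measure {..<n + k} \<rightarrow>\<^sub>M subprob_algebra borel"
proof -
  have "kj k \<omega> \<in> count_space {..<n + k} \<rightarrow>\<^sub>M subprob_algebra borel"
    using kj_prob by (auto simp: space_subprob_algebra prob_space_imp_subprob_space)
  then show ?thesis by (simp only: measurable_cong_sets[OF sets_uniform_count_measure_count_space refl])
qed

lemma nn_integral_kj:
  assumes [measurable]: "h \<in> borel_measurable borel"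
  shows "(\<integral>\<^sup>+z. h z \<partial>kj k \<omega> j) = (\<integral>\<^sup>+y. ennreal (pd k \<omega> (Xj j \<omega>) y) * h (Xj j \<omega>, y) \<partial>lborel)"
  unfolding kj_def by (simp add: nn_integral_distr nn_integral_density)

lemma nk_pos: "n + k > 0" using n1 by simp

lemma nn_integral_st:
  assumes [measurable]: "h \<in> borel_measurable borel"
  shows "(\<integral>\<^sup>+z. h z \<partial>st k \<omega>) = (\<Sum>j<n + k. (\<integral>\<^sup>+y. ennreal (pd k \<omega> (Xj j \<omega>) y) * h (Xj j \<omega>, y) \<partial>lborel)) / of_nat (n + k)"
proof -
  have "(\<integral>\<^sup>+z. h z \<partial>st k \<omega>) = (\<integral>\<^sup>+j. (\<integral>\<^sup>+z. h z \<partial>kj k \<omega> j) \<partial>uniform_count_measure {..<n + k})"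
    unfolding st_eq by (rule nn_integral_bind[OF assms kj_meas])
  also have "\<dots> = (\<Sum>j<n + k. ennreal (1 / real (card {..<n + k})) * (\<integral>\<^sup>+z. h z \<partial>kj k \<omega> j))"
    unfolding uniform_count_measure_def by (subst nn_integral_point_measure_finite) auto
  also have "\<dots> = (\<Sum>j<n + k. inverse (of_nat (n + k)) * (\<integral>\<^sup>+y. ennreal (pd k \<omega> (Xj j \<omega>) y) * h (Xj j \<omega>, y) \<partial>lborel))"
  proof (intro sum.cong refl)
    fix j
    have "inverse (of_nat (n + k) :: ennreal) = inverse (ennreal (real (n + k)))"
      by (simp only: ennreal_of_nat_eq_real_of_nat)
    also have "\<dots> = ennreal (inverse (real (n + k)))"
      by (rule inverse_ennreal) (use n1 in simp)
    also have "\<dots> = ennreal (1 / real (card {..<n + k}))"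
      by (simp add: inverse_eq_divide)
    finally have c: "ennreal (1 / real (card {..<n + k})) = inverse (of_nat (n + k))" ..
    show "ennreal (1 / real (card {..<n + k})) * (\<integral>\<^sup>+z. h z \<partial>kj k \<omega> j) =
      inverse (of_nat (n + k)) * (\<integral>\<^sup>+y. ennreal (pd k \<omega> (Xj j \<omega>) y) * h (Xj j \<omega>, y) \<partial>lborel)"
      unfolding c nn_integral_kj[OF assms] ..
  qed
  also have "\<dots> = (\<Sum>j<n + k. (\<integral>\<^sup>+y. ennreal (pd k \<omega> (Xj j \<omega>) y) * h (Xj j \<omega>, y) \<partial>lborel)) / of_nat (n + k)"
    by (simp add: sum_distrib_left[symmetric] divide_ennreal_def mult.commute)
  finally show ?thesis .
qed

lemma st_prob: "prob_space (st k \<omega>)"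
proof -
  interpret prob_space "uniform_count_measure {..<n + k}"
    using nk_pos by (intro prob_space_uniform_count_measure) auto
  show ?thesis unfolding st_eq
    by (rule prob_space_bind[OF _ kj_meas]) (simp add: kj_prob)
qed

lemma sets_st[simp]: "sets (st k \<omega>) = sets borel"
  unfolding st_eq using nk_pos
  by (subst sets_bind[where N=borel]) (auto simp: space_uniform_count_measure)

definition KK :: "nat \<Rightarrow> (nat \<Rightarrow> (real^'d) \<times> real) \<Rightarrow> (nat \<Rightarrow> (real^'d) \<times> real) measure" where
  "KK k \<omega> = distr (st k \<omega>) path_space (\<lambda>z. fun_upd \<omega> k z)"

lemma law_Suc: "lw (Suc k) = bind (lw k) (KK k)"
  unfolding KK_def by simp

lemma meas_upd_z: "(\<lambda>z. fun_upd \<omega> k z) \<in> st k \<omega> \<rightarrow>\<^sub>M path_space"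
proof -
  have "(\<lambda>z. fun_upd \<omega> k z) \<in> borel \<rightarrow>\<^sub>M path_space" by measurable
  then show ?thesis by (simp cong: measurable_cong_sets)
qed

lemma KK_prob: "prob_space (KK k \<omega>)"
  unfolding KK_def using st_prob meas_upd_z by (intro prob_space.prob_space_distr) auto

lemma nn_integral_KK:
  assumes [measurable]: "g \<in> borel_measurable path_space"
  shows "(\<integral>\<^sup>+w. g w \<partial>KK k \<omega>) = (\<integral>\<^sup>+z. g (fun_upd \<omega> k z) \<partial>st k \<omega>)"
  unfolding KK_def using meas_upd_z by (simp add: nn_integral_distr)

lemma KK_meas: "KK k \<in> path_space \<rightarrow>\<^sub>M subprob_algebra path_space"
proof (rule measurable_subprob_algebra)
  show "\<And>a. a \<in> space path_space \<Longrightarrow> subprob_space (KK k a)"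
    using KK_prob by (simp add: prob_space_imp_subprob_space)
  show "\<And>a. a \<in> space path_space \<Longrightarrow> sets (KK k a) = sets path_space"
    unfolding KK_def by simp
  fix A :: "(nat \<Rightarrow> (real^'d) \<times> real) set" assume A[measurable]: "A \<in> sets path_space"
  have eq: "emeasure (KK k \<omega>) A = (\<Sum>j<n + k. (\<integral>\<^sup>+y. ennreal (pd k \<omega> (Xj j \<omega>) y) * indicator A (fun_upd \<omega> k (Xj j \<omega>, y)) \<partial>lborel)) / of_nat (n + k)" for \<omega>
  proof -
    have "emeasure (KK k \<omega>) A = (\<integral>\<^sup>+w. indicator A w \<partial>KK k \<omega>)"
      by (rule nn_integral_indicator[symmetric]) (simp add: KK_def)
    also have "\<dots> = (\<integral>\<^sup>+z. indicator A (fun_upd \<omega> k z) \<partial>st k \<omega>)"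
      by (rule nn_integral_KK) measurable
    also have "\<dots> = (\<Sum>j<n + k. (\<integral>\<^sup>+y. ennreal (pd k \<omega> (Xj j \<omega>) y) * indicator A (fun_upd \<omega> k (Xj j \<omega>, y)) \<partial>lborel)) / of_nat (n + k)"
      by (rule nn_integral_st) measurable
    finally show ?thesis .
  qed
  show "(\<lambda>\<omega>. emeasure (KK k \<omega>) A) \<in> borel_measurable path_space"
    unfolding eq by measurable
qed

lemma law_props: "prob_space (lw k) \<and> sets (lw k) = sets path_space"
proof (induction k)
  case 0
  have "(\<lambda>_. (0, 0)) \<in> space path_space" by simp
  then show ?case by (simp add: prob_space_return)
next
  case (Suc k)
  then have P: "prob_space (lw k)" and S: "sets (lw k) = sets path_space" by auto
  interpret prob_space "lw k" by (rule P)
  have KM: "KK k \<in> lw k \<rightarrow>\<^sub>M subprob_algebra path_space"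
    using KK_meas by (simp cong: measurable_cong_sets add: S)
  have "prob_space (lw (Suc k))"
    unfolding law_Suc by (rule prob_space_bind[OF _ KM]) (simp add: KK_prob)
  moreover have "sets (lw (Suc k)) = sets path_space"
    unfolding law_Suc by (subst sets_bind[where N=path_space]) (auto simp: KK_def not_empty)
  ultimately show ?case by simp
qed

lemma law_prob: "prob_space (lw k)" using law_props by simp
lemma sets_law[simp, measurable_cong]: "sets (lw k) = sets path_space" using law_props by simp
lemma space_law[simp]: "space (lw k) = UNIV"
  using sets_eq_imp_space_eq[OF sets_law] by simp

lemma nn_integral_law_Suc:
  assumes [measurable]: "g \<in> borel_measurable path_space"
  shows "(\<integral>\<^sup>+w. g w \<partial>lw (Suc k)) = (\<integral>\<^sup>+\<omega>. (\<integral>\<^sup>+z. g (fun_upd \<omega> k z) \<partial>st k \<omega>) \<partial>lw k)"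
proof -
  have KM: "KK k \<in> lw k \<rightarrow>\<^sub>M subprob_algebra path_space"
    using KK_meas by (simp cong: measurable_cong_sets)
  show ?thesis unfolding law_Suc
    by (subst nn_integral_bind[OF assms KM]) (simp add: nn_integral_KK)
qed

end

context prmodel
begin

lemma pd_upd: "k \<le> j \<Longrightarrow> pd k (fun_upd \<omega> j z) = pd k \<omega>"
proof (induction k)
  case 0 then show ?case by simp
next
  case (Suc k)
  have IH: "pd k (fun_upd \<omega> j z) = pd k \<omega>" using Suc.prems by (intro Suc.IH) simp
  have kj: "(fun_upd \<omega> j z) k = \<omega> k" using Suc.prems by simp
  show ?case by (simp only: pdens.simps(2) IH kj)
qed

lemma pc_upd: "k \<le> j \<Longrightarrow> pc k (fun_upd \<omega> j z) = pc k \<omega>"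
  by (rule ext, rule ext) (simp add: pcdf_def pd_upd)

definition Gi :: "nat \<Rightarrow> _ \<Rightarrow> real^'d \<Rightarrow> real \<Rightarrow> real \<Rightarrow> ennreal" where
  "Gi k \<omega> x0 y0 r = (\<integral>\<^sup>+t. indicator {..y0} t * (ennreal (pd k \<omega> x0 t) * ennreal (gcm \<rho>y (pc k \<omega> x0 t) r)) \<partial>lborel)"

definition Hi :: "nat \<Rightarrow> _ \<Rightarrow> real^'d \<Rightarrow> real \<Rightarrow> real \<Rightarrow> real" where
  "Hi k \<omega> x0 y0 r = enn2real (Gi k \<omega> x0 y0 r)"

lemma meas_pd1[measurable]: "pd k \<omega> x0 \<in> borel_measurable borel"
  using meas_pd[of "\<lambda>_. \<omega>" borel "\<lambda>_. x0" "\<lambda>t. t" k] by simp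

lemma meas_pc1[measurable]: "pc k \<omega> x0 \<in> borel_measurable borel"
  using meas_pc[of "\<lambda>_. \<omega>" borel "\<lambda>_. x0" "\<lambda>t. t" k] by simp

lemma Gfull: "(\<integral>\<^sup>+t. ennreal (pd k \<omega> x0 t) * ennreal (gcm \<rho>y (pc k \<omega> x0 t) r) \<partial>lborel) = 1"
proof -
  have "(\<integral>\<^sup>+t. ennreal (pd k \<omega> x0 t) * ennreal (gcm \<rho>y (pc k \<omega> x0 t) r) \<partial>lborel) =
        (\<integral>\<^sup>+t. ennreal (pd k \<omega> x0 t) * ennreal (gcm \<rho>y (Fc (pd k \<omega> x0) t) r) \<partial>lborel)"
    by (simp add: pcdf_Fc)
  also have "\<dots> = (\<integral>\<^sup>+u. indicator {0..1} u * ennreal (gcm \<rho>y u r) \<partial>lborel)"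
    by (rule PIT_nn[OF dens]) measurable
  also have "\<dots> = 1" by (rule copula_integral1[OF ryy])
  finally show ?thesis .
qed

lemma Gi_le1: "Gi k \<omega> x0 y0 r \<le> 1"
  unfolding Gi_def Gfull[symmetric, of k \<omega> x0 r]
  by (intro nn_integral_mono) (auto split: split_indicator)

lemma Gi_fin: "Gi k \<omega> x0 y0 r < top"
  using Gi_le1[of k \<omega> x0 y0 r] by (simp add: le_less_trans)

lemma Gi_eq: "Gi k \<omega> x0 y0 r = ennreal (Hi k \<omega> x0 y0 r)"
  unfolding Hi_def using Gi_fin by (simp add: ennreal_enn2real less_top)

lemma Hi_range: "0 \<le> Hi k \<omega> x0 y0 r" "Hi k \<omega> x0 y0 r \<le> 1"
proof -
  show "0 \<le> Hi k \<omega> x0 y0 r" unfolding Hi_def by simp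
  show "Hi k \<omega> x0 y0 r \<le> 1" using Gi_le1[of k \<omega> x0 y0 r] unfolding Gi_eq by simp
qed

lemma integrable_pg: "integrable lborel (\<lambda>t. pd k \<omega> x0 t * gcm \<rho>y (pc k \<omega> x0 t) r)"
proof (rule integrableI_nonneg)
  show "(\<lambda>t. pd k \<omega> x0 t * gcm \<rho>y (pc k \<omega> x0 t) r) \<in> borel_measurable lborel" by measurable
  show "AE t in lborel. 0 \<le> pd k \<omega> x0 t * gcm \<rho>y (pc k \<omega> x0 t) r"
    using pd_nonneg gcm_nonneg[OF ryy] by simp
  have "(\<integral>\<^sup>+t. ennreal (pd k \<omega> x0 t * gcm \<rho>y (pc k \<omega> x0 t) r) \<partial>lborel) = 1"
    using Gfull[of k \<omega> x0 r] pd_nonneg gcm_nonneg[OF ryy] by (simp add: ennreal_mult)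
  then show "(\<integral>\<^sup>+t. ennreal (pd k \<omega> x0 t * gcm \<rho>y (pc k \<omega> x0 t) r) \<partial>lborel) < \<infinity>" by simp
qed

lemma set_integral_pg: "(LINT t:{..y0}|lborel. pd k \<omega> x0 t * gcm \<rho>y (pc k \<omega> x0 t) r) = Hi k \<omega> x0 y0 r"
proof -
  have "(LINT t:{..y0}|lborel. pd k \<omega> x0 t * gcm \<rho>y (pc k \<omega> x0 t) r) =
      enn2real (\<integral>\<^sup>+t. ennreal (indicator {..y0} t *\<^sub>R (pd k \<omega> x0 t * gcm \<rho>y (pc k \<omega> x0 t) r)) \<partial>lborel)"
    unfolding set_lebesgue_integral_def
    using pd_nonneg gcm_nonneg[OF ryy] by (intro integral_eq_nn_integral) auto
  also have "(\<integral>\<^sup>+t. ennreal (indicator {..y0} t *\<^sub>R (pd k \<omega> x0 t * gcm \<rho>y (pc k \<omega> x0 t) r)) \<partial>lborel) = Gi k \<omega> x0 y0 r"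
    unfolding Gi_def using pd_nonneg gcm_nonneg[OF ryy]
    by (intro nn_integral_cong) (auto split: split_indicator simp: ennreal_mult)
  finally show ?thesis unfolding Hi_def .
qed

lemma pc_Suc_formula:
  "pc (Suc k) (fun_upd \<omega> k z) x0 y0 =
     (1 - alpha_x (n + k + 1) \<rho>x x0 (fst z)) * pc k \<omega> x0 y0
     + alpha_x (n + k + 1) \<rho>x x0 (fst z) * Hi k \<omega> x0 y0 (pc k \<omega> (fst z) (snd z))"
proof -
  define a where "a = alpha_x (n + k + 1) \<rho>x x0 (fst z)"
  define r where "r = pc k \<omega> (fst z) (snd z)"
  have e: "pd (Suc k) (fun_upd \<omega> k z) x0 t = (1 - a) * pd k \<omega> x0 t + a * (pd k \<omega> x0 t * gcm \<rho>y (pc k \<omega> x0 t) r)" for t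
    unfolding pd_Suc a_def r_def by (simp add: pd_upd pc_upd algebra_simps)
  have i1: "integrable lborel (\<lambda>t. indicator {..y0} t * pd k \<omega> x0 t)"
    using integrable_mult_indicator[of "{..y0}" lborel "pd k \<omega> x0"] is_densD(3)[OF dens] by simp
  have i2: "integrable lborel (\<lambda>t. indicator {..y0} t * (pd k \<omega> x0 t * gcm \<rho>y (pc k \<omega> x0 t) r))"
    using integrable_mult_indicator[OF _ integrable_pg, of "{..y0}"] by simp
  have "pc (Suc k) (fun_upd \<omega> k z) x0 y0 =
     (\<integral>t. (1 - a) * (indicator {..y0} t * pd k \<omega> x0 t) + a * (indicator {..y0} t * (pd k \<omega> x0 t * gcm \<rho>y (pc k \<omega> x0 t) r)) \<partial>lborel)"
    unfolding pcdf_def set_lebesgue_integral_def e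
    by (intro Bochner_Integration.integral_cong) (auto simp: algebra_simps)
  also have "\<dots> = (1 - a) * (\<integral>t. indicator {..y0} t * pd k \<omega> x0 t \<partial>lborel) + a * (\<integral>t. indicator {..y0} t * (pd k \<omega> x0 t * gcm \<rho>y (pc k \<omega> x0 t) r) \<partial>lborel)"
    using i1 i2 by simp
  also have "(\<integral>t. indicator {..y0} t * pd k \<omega> x0 t \<partial>lborel) = pc k \<omega> x0 y0"
    unfolding pcdf_def set_lebesgue_integral_def by simp
  also have "(\<integral>t. indicator {..y0} t * (pd k \<omega> x0 t * gcm \<rho>y (pc k \<omega> x0 t) r) \<partial>lborel) = Hi k \<omega> x0 y0 r"
    using set_integral_pg[of y0 k \<omega> x0 r] unfolding set_lebesgue_integral_def by simp
  finally show ?thesis unfolding a_def r_def .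
qed

end

lemma nn_Fc: assumes "is_dens p"
  shows "(\<integral>\<^sup>+t. indicator {..y} t * ennreal (p t) \<partial>lborel) = ennreal (Fc p y)"
proof -
  have ii: "integrable lborel (\<lambda>t. indicator {..y} t *\<^sub>R p t)"
    using is_densD(3)[OF assms] by (intro integrable_mult_indicator) auto
  have "(\<integral>\<^sup>+t. indicator {..y} t * ennreal (p t) \<partial>lborel) = (\<integral>\<^sup>+t. ennreal (indicator {..y} t *\<^sub>R p t) \<partial>lborel)"
    by (intro nn_integral_cong) (auto split: split_indicator)
  also have "\<dots> = ennreal (LINT t:{..y}|lborel. p t)"
    unfolding set_lebesgue_integral_def
    using ii is_densD(2)[OF assms] by (intro nn_integral_eq_integral) auto
  finally show ?thesis unfolding Fc_def .
qed

context prmodel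
begin

lemma meas_Gi[measurable (raw)]:
  assumes [measurable]: "g \<in> borel_measurable M"
  shows "(\<lambda>w. Gi k \<omega> x0 y0 (g w)) \<in> borel_measurable M"
  unfolding Gi_def by measurable

lemma meas_Hi[measurable (raw)]:
  assumes [measurable]: "g \<in> borel_measurable M"
  shows "(\<lambda>w. Hi k \<omega> x0 y0 (g w)) \<in> borel_measurable M"
  unfolding Hi_def by measurable

lemma key_j:
  "(\<integral>\<^sup>+y. ennreal (pd k \<omega> X y) * ennreal (Hi k \<omega> x0 y0 (pc k \<omega> X y)) \<partial>lborel) = ennreal (pc k \<omega> x0 y0)"
proof -
  define f where "f t y = ennreal (pd k \<omega> X y) * (indicator {..y0} t * (ennreal (pd k \<omega> x0 t) * ennreal (gcm \<rho>y (pc k \<omega> x0 t) (pc k \<omega> X y))))" for t y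
  have fm: "case_prod f \<in> borel_measurable (lborel \<Otimes>\<^sub>M lborel)"
    unfolding f_def by measurable
  have "(\<integral>\<^sup>+y. ennreal (pd k \<omega> X y) * ennreal (Hi k \<omega> x0 y0 (pc k \<omega> X y)) \<partial>lborel) =
        (\<integral>\<^sup>+y. ennreal (pd k \<omega> X y) * Gi k \<omega> x0 y0 (pc k \<omega> X y) \<partial>lborel)"
    by (simp add: Gi_eq)
  also have "\<dots> = (\<integral>\<^sup>+y. (\<integral>\<^sup>+t. f t y \<partial>lborel) \<partial>lborel)"
    unfolding Gi_def f_def by (intro nn_integral_cong nn_integral_cmult[symmetric]) measurable
  also have "\<dots> = (\<integral>\<^sup>+t. (\<integral>\<^sup>+y. f t y \<partial>lborel) \<partial>lborel)"
    by (rule lborel_pair.Fubini'[OF fm])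
  also have "\<dots> = (\<integral>\<^sup>+t. indicator {..y0} t * ennreal (pd k \<omega> x0 t) \<partial>lborel)"
  proof (intro nn_integral_cong)
    fix t
    have "(\<integral>\<^sup>+y. f t y \<partial>lborel) = (indicator {..y0} t * ennreal (pd k \<omega> x0 t)) *
           (\<integral>\<^sup>+y. ennreal (pd k \<omega> X y) * ennreal (gcm \<rho>y (pc k \<omega> x0 t) (pc k \<omega> X y)) \<partial>lborel)"
      unfolding f_def by (subst nn_integral_cmult[symmetric]) (measurable, auto intro!: nn_integral_cong simp: ac_simps)
    also have "(\<integral>\<^sup>+y. ennreal (pd k \<omega> X y) * ennreal (gcm \<rho>y (pc k \<omega> x0 t) (pc k \<omega> X y)) \<partial>lborel) =
       (\<integral>\<^sup>+y. ennreal (pd k \<omega> X y) * ennreal (gcm \<rho>y (pc k \<omega> x0 t) (Fc (pd k \<omega> X) y)) \<partial>lborel)"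
      by (simp add: pcdf_Fc)
    also have "\<dots> = (\<integral>\<^sup>+v. indicator {0..1} v * ennreal (gcm \<rho>y (pc k \<omega> x0 t) v) \<partial>lborel)"
      by (rule PIT_nn[OF dens]) measurable
    also have "\<dots> = 1" by (rule copula_integral2[OF ryy])
    finally show "(\<integral>\<^sup>+y. f t y \<partial>lborel) = indicator {..y0} t * ennreal (pd k \<omega> x0 t)" by simp
  qed
  also have "\<dots> = ennreal (pc k \<omega> x0 y0)"
    unfolding pcdf_Fc by (rule nn_Fc[OF dens])
  finally show ?thesis .
qed

end

context prmodel_xs
begin

definition Dz :: "nat \<Rightarrow> _ \<Rightarrow> real^'d \<Rightarrow> real \<Rightarrow> (real^'d) \<times> real \<Rightarrow> real" where
  "Dz k \<omega> x0 y0 z = pc (Suc k) (fun_upd \<omega> k z) x0 y0 - pc k \<omega> x0 y0"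

abbreviation "ax k x0 X \<equiv> alpha_x (n + k + 1) \<rho>x x0 X"

lemma Dz_eq: "Dz k \<omega> x0 y0 z = ax k x0 (fst z) * Hi k \<omega> x0 y0 (pc k \<omega> (fst z) (snd z)) - ax k x0 (fst z) * pc k \<omega> x0 y0"
  unfolding Dz_def pc_Suc_formula by (simp add: algebra_simps)

lemma ax_bounds: "0 \<le> ax k x0 X" "ax k x0 X \<le> 1" "ax k x0 X \<le> 2 * Cb \<rho>x x0 * alpha (n + k + 1)"
  using alpha_x_bounds[where \<rho>x=\<rho>x and i="n + k + 1" and x=x0 and x'=X] rx by auto

lemma Dz_bound: "\<bar>Dz k \<omega> x0 y0 z\<bar> \<le> 2 * Cb \<rho>x x0 * alpha (n + k + 1)"
proof -
  have h: "Hi k \<omega> x0 y0 (pc k \<omega> (fst z) (snd z)) \<in> {0..1}" using Hi_range by auto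
  have q: "pc k \<omega> x0 y0 \<in> {0..1}" by (rule pc_range)
  have "\<bar>Hi k \<omega> x0 y0 (pc k \<omega> (fst z) (snd z)) - pc k \<omega> x0 y0\<bar> \<le> 1" using h q by auto
  moreover have "\<bar>Dz k \<omega> x0 y0 z\<bar> = ax k x0 (fst z) * \<bar>Hi k \<omega> x0 y0 (pc k \<omega> (fst z) (snd z)) - pc k \<omega> x0 y0\<bar>"
    unfolding Dz_eq right_diff_distrib[symmetric] abs_mult using ax_bounds(1)[of k x0 "fst z"] by simp
  moreover have "ax k x0 (fst z) * \<bar>Hi k \<omega> x0 y0 (pc k \<omega> (fst z) (snd z)) - pc k \<omega> x0 y0\<bar> \<le> ax k x0 (fst z) * 1"
    by (rule mult_left_mono) (fact, rule ax_bounds(1))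
  ultimately have "\<bar>Dz k \<omega> x0 y0 z\<bar> \<le> ax k x0 (fst z) * 1" by simp
  then show ?thesis using ax_bounds(3)[of k x0 "fst z"] by simp
qed

lemma meas_Dz[measurable]: "Dz k \<omega> x0 y0 \<in> borel_measurable borel"
  unfolding Dz_def by measurable

lemma nn_aH: "(\<integral>\<^sup>+z. ennreal (ax k x0 (fst z) * Hi k \<omega> x0 y0 (pc k \<omega> (fst z) (snd z))) \<partial>st k \<omega>) =
              (\<integral>\<^sup>+z. ennreal (ax k x0 (fst z) * pc k \<omega> x0 y0) \<partial>st k \<omega>)"
proof -
  have m1: "(\<lambda>z. ennreal (ax k x0 (fst z) * Hi k \<omega> x0 y0 (pc k \<omega> (fst z) (snd z)))) \<in> borel_measurable borel"
    by measurable
  have m2: "(\<lambda>z::(real^'d) \<times> real. ennreal (ax k x0 (fst z) * pc k \<omega> x0 y0)) \<in> borel_measurable borel"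
  proof -
    define c where "c = pc k \<omega> x0 y0"
    have a0: "(\<lambda>X. ax k x0 X) \<in> borel_measurable borel" by measurable
    have a: "(\<lambda>z::(real^'d) \<times> real. ax k x0 (fst z)) \<in> borel_measurable borel"
      using measurable_compose[OF meas_fst_borel[where 'a="real^'d" and 'b=real] a0] .
    have "(\<lambda>z::(real^'d) \<times> real. ax k x0 (fst z) * c) \<in> borel_measurable borel" using a by (rule borel_measurable_times) simp
    from measurable_compose[OF this measurable_ennreal] show ?thesis unfolding c_def .
  qed
  have "(\<integral>\<^sup>+z. ennreal (ax k x0 (fst z) * Hi k \<omega> x0 y0 (pc k \<omega> (fst z) (snd z))) \<partial>st k \<omega>) =
    (\<Sum>j<n + k. (\<integral>\<^sup>+y. ennreal (pd k \<omega> (Xj j \<omega>) y) * ennreal (ax k x0 (Xj j \<omega>) * Hi k \<omega> x0 y0 (pc k \<omega> (Xj j \<omega>) y)) \<partial>lborel)) / of_nat (n + k)"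
    unfolding nn_integral_st[OF m1] by simp
  also have "\<dots> = (\<Sum>j<n + k. ennreal (ax k x0 (Xj j \<omega>)) * ennreal (pc k \<omega> x0 y0)) / of_nat (n + k)"
  proof (intro arg_cong2[where f="(/)"] sum.cong refl)
    fix j
    have "(\<integral>\<^sup>+y. ennreal (pd k \<omega> (Xj j \<omega>) y) * ennreal (ax k x0 (Xj j \<omega>) * Hi k \<omega> x0 y0 (pc k \<omega> (Xj j \<omega>) y)) \<partial>lborel)
      = (\<integral>\<^sup>+y. ennreal (ax k x0 (Xj j \<omega>)) * (ennreal (pd k \<omega> (Xj j \<omega>) y) * ennreal (Hi k \<omega> x0 y0 (pc k \<omega> (Xj j \<omega>) y))) \<partial>lborel)"
      using ax_bounds(1) Hi_range(1) by (intro nn_integral_cong) (simp add: ennreal_mult ac_simps)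
    also have "\<dots> = ennreal (ax k x0 (Xj j \<omega>)) * (\<integral>\<^sup>+y. ennreal (pd k \<omega> (Xj j \<omega>) y) * ennreal (Hi k \<omega> x0 y0 (pc k \<omega> (Xj j \<omega>) y)) \<partial>lborel)"
      by (rule nn_integral_cmult) measurable
    also have "\<dots> = ennreal (ax k x0 (Xj j \<omega>)) * ennreal (pc k \<omega> x0 y0)"
      by (simp only: key_j)
    finally show "(\<integral>\<^sup>+y. ennreal (pd k \<omega> (Xj j \<omega>) y) * ennreal (ax k x0 (Xj j \<omega>) * Hi k \<omega> x0 y0 (pc k \<omega> (Xj j \<omega>) y)) \<partial>lborel)
      = ennreal (ax k x0 (Xj j \<omega>)) * ennreal (pc k \<omega> x0 y0)" .
  qed
  also have "\<dots> = (\<Sum>j<n + k. (\<integral>\<^sup>+y. ennreal (pd k \<omega> (Xj j \<omega>) y) * ennreal (ax k x0 (Xj j \<omega>) * pc k \<omega> x0 y0) \<partial>lborel)) / of_nat (n + k)"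
  proof (intro arg_cong2[where f="(/)"] sum.cong refl)
    fix j
    have "(\<integral>\<^sup>+y. ennreal (pd k \<omega> (Xj j \<omega>) y) * ennreal (ax k x0 (Xj j \<omega>) * pc k \<omega> x0 y0) \<partial>lborel) =
       (\<integral>\<^sup>+y. ennreal (pd k \<omega> (Xj j \<omega>) y) \<partial>lborel) * ennreal (ax k x0 (Xj j \<omega>) * pc k \<omega> x0 y0)"
      by (rule nn_integral_multc) measurable
    also have "\<dots> = ennreal (ax k x0 (Xj j \<omega>)) * ennreal (pc k \<omega> x0 y0)"
      using is_dens_nn[OF dens] ax_bounds(1) pc_range by (simp add: ennreal_mult)
    finally show "ennreal (ax k x0 (Xj j \<omega>)) * ennreal (pc k \<omega> x0 y0) =
       (\<integral>\<^sup>+y. ennreal (pd k \<omega> (Xj j \<omega>) y) * ennreal (ax k x0 (Xj j \<omega>) * pc k \<omega> x0 y0) \<partial>lborel)" ..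
  qed
  also have "\<dots> = (\<integral>\<^sup>+z. ennreal (ax k x0 (fst z) * pc k \<omega> x0 y0) \<partial>st k \<omega>)"
    unfolding nn_integral_st[OF m2] by simp
  finally show ?thesis .
qed

lemma expectation_Dz: "(\<integral>z. Dz k \<omega> x0 y0 z \<partial>st k \<omega>) = 0"
proof -
  interpret P: prob_space "st k \<omega>" by (rule st_prob)
  let ?A = "\<lambda>z. ax k x0 (fst z) * Hi k \<omega> x0 y0 (pc k \<omega> (fst z) (snd z))"
  let ?B = "\<lambda>z. ax k x0 (fst z) * pc k \<omega> x0 y0"
  have mA: "?A \<in> borel_measurable (st k \<omega>)" by (simp cong: measurable_cong_sets) measurable
  have mB: "?B \<in> borel_measurable (st k \<omega>)"
  proof -
    define c where "c = pc k \<omega> x0 y0"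
    have a0: "(\<lambda>X. ax k x0 X) \<in> borel_measurable borel" by measurable
    have a: "(\<lambda>z::(real^'d) \<times> real. ax k x0 (fst z)) \<in> borel_measurable borel"
      using measurable_compose[OF meas_fst_borel[where 'a="real^'d" and 'b=real] a0] .
    have "(\<lambda>z::(real^'d) \<times> real. ax k x0 (fst z) * c) \<in> borel_measurable borel" using a by (rule borel_measurable_times) simp
    then show ?thesis unfolding c_def by (simp cong: measurable_cong_sets)
  qed
  have A0: "\<And>z. ?A z \<ge> 0" using ax_bounds(1) Hi_range(1) by simp
  have B0: "\<And>z. ?B z \<ge> 0" using ax_bounds(1) pc_range by simp
  have A1: "\<And>z. norm (?A z) \<le> 1" using ax_bounds(1,2) Hi_range A0 by (simp add: mult_le_one)
  have B1: "\<And>z. norm (?B z) \<le> 1" using ax_bounds(1,2) pc_range B0 by (simp add: mult_le_one)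
  have iA: "integrable (st k \<omega>) ?A" using A1 mA by (intro P.integrable_const_bound[where B=1]) auto
  have iB: "integrable (st k \<omega>) ?B" using B1 mB by (intro P.integrable_const_bound[where B=1]) auto
  have "(\<integral>z. ?A z \<partial>st k \<omega>) = (\<integral>z. ?B z \<partial>st k \<omega>)"
  proof -
    have "(\<integral>z. ?A z \<partial>st k \<omega>) = enn2real (\<integral>\<^sup>+z. ennreal (?A z) \<partial>st k \<omega>)"
      by (rule integral_eq_nn_integral[OF mA]) (use A0 in auto)
    moreover have "(\<integral>z. ?B z \<partial>st k \<omega>) = enn2real (\<integral>\<^sup>+z. ennreal (?B z) \<partial>st k \<omega>)"
      by (rule integral_eq_nn_integral[OF mB]) (use B0 in auto)
    ultimately show ?thesis by (simp only: nn_aH)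
  qed
  moreover have "(\<integral>z. Dz k \<omega> x0 y0 z \<partial>st k \<omega>) = (\<integral>z. ?A z - ?B z \<partial>st k \<omega>)"
    by (simp only: Dz_eq)
  moreover have "(\<integral>z. ?A z - ?B z \<partial>st k \<omega>) = (\<integral>z. ?A z \<partial>st k \<omega>) - (\<integral>z. ?B z \<partial>st k \<omega>)"
    by (rule Bochner_Integration.integral_diff[OF iA iB])
  ultimately show ?thesis by simp
qed

lemma mgf_Dz:
  "(\<integral>\<^sup>+z. ennreal (exp (l * Dz k \<omega> x0 y0 z)) \<partial>st k \<omega>) \<le> ennreal (exp (l\<^sup>2 * (2 * Cb \<rho>x x0 * alpha (n + k + 1))\<^sup>2 / 2))"
proof -
  define B where "B = 2 * Cb \<rho>x x0 * alpha (n + k + 1)"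
  interpret P: prob_space "st k \<omega>" by (rule st_prob)
  have mD: "Dz k \<omega> x0 y0 \<in> borel_measurable (st k \<omega>)" by (simp cong: measurable_cong_sets)
  have bd: "Dz k \<omega> x0 y0 z \<in> {-B..B}" for z
  proof -
    have h: "\<bar>Dz k \<omega> x0 y0 z\<bar> \<le> B" unfolding B_def by (rule Dz_bound)
    show ?thesis using abs_le_D1[OF h] abs_le_D2[OF h] by simp
  qed
  have bd': "- Dz k \<omega> x0 y0 z \<in> {-B..B}" for z
    using bd[of z] by simp
  have bb: "(B - - B)\<^sup>2 = 4 * B\<^sup>2" by (simp add: power2_eq_square algebra_simps)
  have eqB: "l\<^sup>2 * (B - - B)\<^sup>2 / 8 = l\<^sup>2 * B\<^sup>2 / 2" unfolding bb by simp
  have eqB': "(- l)\<^sup>2 * (B - - B)\<^sup>2 / 8 = l\<^sup>2 * B\<^sup>2 / 2" unfolding bb by simp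
  have main: "(\<integral>\<^sup>+z. ennreal (exp (l * Dz k \<omega> x0 y0 z)) \<partial>st k \<omega>) \<le> ennreal (exp (l\<^sup>2 * B\<^sup>2 / 2))"
  proof (cases l "0::real" rule: linorder_cases)
    case equal
    then show ?thesis by (simp add: P.emeasure_space_1)
  next
    case greater
    interpret I: interval_bounded_random_variable "st k \<omega>" "Dz k \<omega> x0 y0" "-B" B
      by (intro interval_bounded_random_variable.intro interval_bounded_random_variable_axioms.intro st_prob mD AE_I2 bd)
    have "(\<integral>\<^sup>+z. ennreal (exp (l * Dz k \<omega> x0 y0 z)) \<partial>st k \<omega>) \<le> ennreal (exp (l\<^sup>2 * (B - - B)\<^sup>2 / 8))"
      by (rule I.Hoeffdings_lemma_nn_integral_0[OF greater expectation_Dz])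
    then show ?thesis by (simp only: eqB)
  next
    case less
    have mD': "(\<lambda>z. - Dz k \<omega> x0 y0 z) \<in> borel_measurable (st k \<omega>)" using mD by measurable
    interpret I: interval_bounded_random_variable "st k \<omega>" "\<lambda>z. - Dz k \<omega> x0 y0 z" "-B" B
      by (intro interval_bounded_random_variable.intro interval_bounded_random_variable_axioms.intro st_prob mD' AE_I2 bd')
    have e0: "(\<integral>z. - Dz k \<omega> x0 y0 z \<partial>st k \<omega>) = 0" using expectation_Dz by simp
    have "(\<integral>\<^sup>+z. ennreal (exp ((- l) * (- Dz k \<omega> x0 y0 z))) \<partial>st k \<omega>) \<le> ennreal (exp ((- l)\<^sup>2 * (B - - B)\<^sup>2 / 8))"
      using less by (intro I.Hoeffdings_lemma_nn_integral_0[OF _ e0]) simp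
    then show ?thesis by (simp only: eqB' minus_mult_minus)
  qed
  then show ?thesis by (simp only: B_def)
qed

end

context prmodel_xs
begin

definition SS :: "nat \<Rightarrow> nat \<Rightarrow> real^'d \<Rightarrow> real \<Rightarrow> _ \<Rightarrow> real" where
  "SS k0 k x0 y0 \<omega> = pc k \<omega> x0 y0 - pc k0 \<omega> x0 y0"

lemma meas_SS[measurable]: "SS k0 k x0 y0 \<in> borel_measurable path_space"
  unfolding SS_def by measurable

abbreviation "Bk x0 k \<equiv> 2 * Cb \<rho>x x0 * alpha (n + k + 1)"

lemma SS_upd: "k0 \<le> k \<Longrightarrow> SS k0 (Suc k) x0 y0 (fun_upd \<omega> k z) = SS k0 k x0 y0 \<omega> + Dz k \<omega> x0 y0 z"
  unfolding SS_def Dz_def by (simp add: pc_upd)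

lemma azuma:
  "(\<integral>\<^sup>+\<omega>. ennreal (exp (l * SS k0 (k0 + m) x0 y0 \<omega>)) \<partial>lw (k0 + m))
     \<le> ennreal (exp (l\<^sup>2 * (\<Sum>i<m. (Bk x0 (k0 + i))\<^sup>2) / 2))"
proof (induction m)
  case 0
  interpret prob_space "lw k0" by (rule law_prob)
  show ?case by (simp add: SS_def emeasure_space_1[simplified])
next
  case (Suc m)
  define k where "k = k0 + m"
  have kk: "k0 \<le> k" unfolding k_def by simp
  have m1[measurable]: "(\<lambda>\<omega>. ennreal (exp (l * SS k0 (Suc k) x0 y0 \<omega>))) \<in> borel_measurable path_space"
    by measurable
  have m0: "(\<lambda>\<omega>. ennreal (exp (l * SS k0 k x0 y0 \<omega>))) \<in> borel_measurable (lw k)"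
    by (simp cong: measurable_cong_sets) measurable
  define c where "c = ennreal (exp (l\<^sup>2 * (Bk x0 k)\<^sup>2 / 2))"
  have "(\<integral>\<^sup>+\<omega>. ennreal (exp (l * SS k0 (Suc k) x0 y0 \<omega>)) \<partial>lw (Suc k)) =
        (\<integral>\<^sup>+\<omega>. (\<integral>\<^sup>+z. ennreal (exp (l * SS k0 (Suc k) x0 y0 (fun_upd \<omega> k z))) \<partial>st k \<omega>) \<partial>lw k)"
    by (rule nn_integral_law_Suc[OF m1])
  also have "\<dots> = (\<integral>\<^sup>+\<omega>. ennreal (exp (l * SS k0 k x0 y0 \<omega>)) * (\<integral>\<^sup>+z. ennreal (exp (l * Dz k \<omega> x0 y0 z)) \<partial>st k \<omega>) \<partial>lw k)"
  proof (intro nn_integral_cong)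
    fix \<omega>
    have "(\<integral>\<^sup>+z. ennreal (exp (l * SS k0 (Suc k) x0 y0 (fun_upd \<omega> k z))) \<partial>st k \<omega>) =
          (\<integral>\<^sup>+z. ennreal (exp (l * SS k0 k x0 y0 \<omega>)) * ennreal (exp (l * Dz k \<omega> x0 y0 z)) \<partial>st k \<omega>)"
      by (intro nn_integral_cong) (simp add: SS_upd[OF kk] distrib_left exp_add ennreal_mult)
    also have "\<dots> = ennreal (exp (l * SS k0 k x0 y0 \<omega>)) * (\<integral>\<^sup>+z. ennreal (exp (l * Dz k \<omega> x0 y0 z)) \<partial>st k \<omega>)"
      by (rule nn_integral_cmult) (simp cong: measurable_cong_sets)
    finally show "(\<integral>\<^sup>+z. ennreal (exp (l * SS k0 (Suc k) x0 y0 (fun_upd \<omega> k z))) \<partial>st k \<omega>) =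
       ennreal (exp (l * SS k0 k x0 y0 \<omega>)) * (\<integral>\<^sup>+z. ennreal (exp (l * Dz k \<omega> x0 y0 z)) \<partial>st k \<omega>)" .
  qed
  also have "\<dots> \<le> (\<integral>\<^sup>+\<omega>. ennreal (exp (l * SS k0 k x0 y0 \<omega>)) * c \<partial>lw k)"
    unfolding c_def by (intro nn_integral_mono mult_left_mono mgf_Dz) simp
  also have "\<dots> = (\<integral>\<^sup>+\<omega>. ennreal (exp (l * SS k0 k x0 y0 \<omega>)) \<partial>lw k) * c"
    by (rule nn_integral_multc[OF m0])
  also have "\<dots> \<le> ennreal (exp (l\<^sup>2 * (\<Sum>i<m. (Bk x0 (k0 + i))\<^sup>2) / 2)) * c"
    using Suc.IH unfolding k_def by (intro mult_right_mono) auto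
  also have "\<dots> = ennreal (exp (l\<^sup>2 * (\<Sum>i<Suc m. (Bk x0 (k0 + i))\<^sup>2) / 2))"
    unfolding c_def k_def by (simp add: ennreal_mult[symmetric] exp_add[symmetric] add_divide_distrib distrib_left)
  finally show ?case unfolding k_def by simp
qed

lemma chernoff:
  assumes "0 \<le> l" and m[measurable]: "f \<in> borel_measurable path_space"
  shows "emeasure (lw K) {\<omega> \<in> space path_space. f \<omega> \<ge> \<epsilon>} \<le> ennreal (exp (- l * \<epsilon>)) * (\<integral>\<^sup>+\<omega>. ennreal (exp (l * f \<omega>)) \<partial>lw K)"
proof -
  have "emeasure (lw K) {\<omega> \<in> space path_space. f \<omega> \<ge> \<epsilon>} = (\<integral>\<^sup>+\<omega>. indicator {\<omega> \<in> space path_space. f \<omega> \<ge> \<epsilon>} \<omega> \<partial>lw K)"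
  proof (rule nn_integral_indicator[symmetric])
    have "{\<omega> \<in> space path_space. f \<omega> \<ge> \<epsilon>} \<in> sets path_space" by measurable
    then show "{\<omega> \<in> space path_space. f \<omega> \<ge> \<epsilon>} \<in> sets (lw K)" by (simp only: sets_law)
  qed
  also have "\<dots> \<le> (\<integral>\<^sup>+\<omega>. ennreal (exp (- l * \<epsilon>)) * ennreal (exp (l * f \<omega>)) \<partial>lw K)"
  proof (intro nn_integral_mono)
    fix \<omega>
    show "indicator {\<omega> \<in> space path_space. f \<omega> \<ge> \<epsilon>} \<omega> \<le> ennreal (exp (- l * \<epsilon>)) * ennreal (exp (l * f \<omega>))"
    proof (cases "f \<omega> \<ge> \<epsilon>")
      case True
      then have "l * \<epsilon> \<le> l * f \<omega>" using assms(1) by (simp add: mult_left_mono)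
      then have "1 \<le> exp (- l * \<epsilon>) * exp (l * f \<omega>)" by (simp add: exp_add[symmetric])
      then show ?thesis using True by (simp add: ennreal_mult[symmetric])
    qed simp
  qed
  also have "\<dots> = ennreal (exp (- l * \<epsilon>)) * (\<integral>\<^sup>+\<omega>. ennreal (exp (l * f \<omega>)) \<partial>lw K)"
    by (rule nn_integral_cmult) (simp cong: measurable_cong_sets)
  finally show ?thesis .
qed

end

lemma exp_compare:
  fixes \<epsilon> C a V :: real
  assumes "\<epsilon> \<ge> 0" "C > 0" "a > 0" "V > 0"
  shows "exp (- (\<epsilon>\<^sup>2 / (2 * (C\<^sup>2 * V)))) \<le> exp (- \<epsilon>\<^sup>2 / (4 * \<epsilon> * C * a / 3 + 2 * C\<^sup>2 * V))"
proof -
  have p: "2 * (C\<^sup>2 * V) > 0" using assms by simp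
  have le: "2 * (C\<^sup>2 * V) \<le> 4 * \<epsilon> * C * a / 3 + 2 * C\<^sup>2 * V" using assms by simp
  have "\<epsilon>\<^sup>2 / (4 * \<epsilon> * C * a / 3 + 2 * C\<^sup>2 * V) \<le> \<epsilon>\<^sup>2 / (2 * (C\<^sup>2 * V))"
  proof (rule divide_left_mono)
    have "4 * \<epsilon> * C * a / 3 + 2 * C\<^sup>2 * V > 0" using p le by linarith
    then show "0 < (4 * \<epsilon> * C * a / 3 + 2 * C\<^sup>2 * V) * (2 * (C\<^sup>2 * V))" using p by (rule mult_pos_pos)
  qed (use le in simp_all)
  then show ?thesis by (simp add: minus_divide_left[symmetric] del: minus_divide_left)
qed

lemma opt_exp:
  fixes \<epsilon> V :: real assumes "V > 0"
  shows "- (\<epsilon> / V) * \<epsilon> + (\<epsilon> / V)\<^sup>2 * V / 2 = - (\<epsilon>\<^sup>2 / (2 * V))"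
proof -
  have "(\<epsilon> / V)\<^sup>2 * V = \<epsilon>\<^sup>2 / V" using assms by (simp add: power2_eq_square)
  then have "- (\<epsilon> / V) * \<epsilon> + (\<epsilon> / V)\<^sup>2 * V / 2 = - (\<epsilon>\<^sup>2 / V) + \<epsilon>\<^sup>2 / V / 2"
    by (simp add: power2_eq_square)
  also have "\<dots> = - (\<epsilon>\<^sup>2 / (2 * V))" by simp
  finally show ?thesis .
qed

context prmodel_xs
begin

lemma main_meas:
  assumes NM: "n \<le> N" "N < M" and e: "\<epsilon> \<ge> 0"
  shows "measure (lw (M - n)) {\<omega> \<in> space path_space. \<bar>pc (M - n) \<omega> x0 y0 - pc (N - n) \<omega> x0 y0\<bar> \<ge> \<epsilon>}
     \<le> 2 * exp (- \<epsilon>\<^sup>2 / (4 * \<epsilon> * (2 * Cb \<rho>x x0) * alpha (N + 1) / 3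
                          + 2 * (2 * Cb \<rho>x x0)\<^sup>2 * (\<Sum>i = N + 1..M. (alpha i)\<^sup>2)))"
proof -
  define k0 where "k0 = N - n"
  define m where "m = M - N"
  define C where "C = 2 * Cb \<rho>x x0"
  define \<Sigma> where "\<Sigma> = (\<Sum>i = N + 1..M. (alpha i)\<^sup>2)"
  have K: "M - n = k0 + m" unfolding k0_def m_def using NM by simp
  have Cpos: "C > 0" unfolding C_def using Cb_pos[OF rx] by simp
  have sig: "(\<Sum>i<m. (Bk x0 (k0 + i))\<^sup>2) = C\<^sup>2 * \<Sigma>"
  proof -
    have "(\<Sum>i<m. (Bk x0 (k0 + i))\<^sup>2) = (\<Sum>i<m. C\<^sup>2 * (alpha (i + (N + 1)))\<^sup>2)"
      unfolding C_def k0_def using NM by (intro sum.cong refl) (simp add: power_mult_distrib ac_simps)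
    also have "\<dots> = C\<^sup>2 * (\<Sum>i\<in>{0..<m}. (alpha (i + (N + 1)))\<^sup>2)"
      by (simp add: sum_distrib_left atLeast0LessThan)
    also have "(\<Sum>i\<in>{0..<m}. (alpha (i + (N + 1)))\<^sup>2) = (\<Sum>i\<in>{0 + (N + 1)..<m + (N + 1)}. (alpha i)\<^sup>2)"
      by (rule sum.shift_bounds_nat_ivl[symmetric])
    also have "{0 + (N + 1)..<m + (N + 1)} = {N + 1..M}" unfolding m_def using NM by auto
    finally show ?thesis unfolding \<Sigma>_def .
  qed
  have \<Sigma>pos: "\<Sigma> > 0"
  proof -
    have "(alpha M)\<^sup>2 \<le> \<Sigma>" unfolding \<Sigma>_def using NM
      by (intro member_le_sum) auto
    moreover have "alpha M > 0" using NM n1 by (intro alpha_pos) simp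
    ultimately show ?thesis by (smt (verit) zero_less_power)
  qed
  define V where "V = C\<^sup>2 * \<Sigma>"
  have Vpos: "V > 0" unfolding V_def using Cpos \<Sigma>pos by simp
  define l where "l = \<epsilon> / V"
  have l0: "l \<ge> 0" unfolding l_def using e Vpos by simp
  define f where "f = SS k0 (k0 + m) x0 y0"
  have mf[measurable]: "f \<in> borel_measurable path_space" unfolding f_def by measurable
  have mf'[measurable]: "(\<lambda>\<omega>. - f \<omega>) \<in> borel_measurable path_space" by measurable
  have le: "- l * \<epsilon> + l\<^sup>2 * V / 2 = - (\<epsilon>\<^sup>2 / (2 * V))" unfolding l_def by (rule opt_exp[OF Vpos])
  have "ennreal (exp (- l * \<epsilon>)) * ennreal (exp (l\<^sup>2 * V / 2)) = ennreal (exp (- l * \<epsilon>) * exp (l\<^sup>2 * V / 2))"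
    by (rule ennreal_mult[symmetric]) auto
  also have "exp (- l * \<epsilon>) * exp (l\<^sup>2 * V / 2) = exp (- l * \<epsilon> + l\<^sup>2 * V / 2)" by (rule exp_add[symmetric])
  finally have bnd: "ennreal (exp (- l * \<epsilon>)) * ennreal (exp (l\<^sup>2 * V / 2)) = ennreal (exp (- (\<epsilon>\<^sup>2 / (2 * V))))"
    unfolding le .
  have E1: "emeasure (lw (k0 + m)) {\<omega> \<in> space path_space. f \<omega> \<ge> \<epsilon>} \<le> ennreal (exp (- (\<epsilon>\<^sup>2 / (2 * V))))"
  proof -
    have "emeasure (lw (k0 + m)) {\<omega> \<in> space path_space. f \<omega> \<ge> \<epsilon>} \<le> ennreal (exp (- l * \<epsilon>)) * (\<integral>\<^sup>+\<omega>. ennreal (exp (l * f \<omega>)) \<partial>lw (k0 + m))"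
      by (rule chernoff[OF l0 mf])
    also have "\<dots> \<le> ennreal (exp (- l * \<epsilon>)) * ennreal (exp (l\<^sup>2 * V / 2))"
    proof (rule mult_left_mono)
      show "(\<integral>\<^sup>+\<omega>. ennreal (exp (l * f \<omega>)) \<partial>lw (k0 + m)) \<le> ennreal (exp (l\<^sup>2 * V / 2))"
        unfolding f_def V_def sig[symmetric] by (rule azuma)
    qed simp
    finally show ?thesis unfolding bnd .
  qed
  have E2: "emeasure (lw (k0 + m)) {\<omega> \<in> space path_space. - f \<omega> \<ge> \<epsilon>} \<le> ennreal (exp (- (\<epsilon>\<^sup>2 / (2 * V))))"
  proof -
    have "emeasure (lw (k0 + m)) {\<omega> \<in> space path_space. - f \<omega> \<ge> \<epsilon>} \<le> ennreal (exp (- l * \<epsilon>)) * (\<integral>\<^sup>+\<omega>. ennreal (exp (l * - f \<omega>)) \<partial>lw (k0 + m))"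
      by (rule chernoff[OF l0 mf'])
    also have "\<dots> \<le> ennreal (exp (- l * \<epsilon>)) * ennreal (exp (l\<^sup>2 * V / 2))"
    proof (rule mult_left_mono)
      have "(\<integral>\<^sup>+\<omega>. ennreal (exp ((- l) * f \<omega>)) \<partial>lw (k0 + m)) \<le> ennreal (exp ((- l)\<^sup>2 * V / 2))"
        unfolding f_def V_def sig[symmetric] by (rule azuma)
      then show "(\<integral>\<^sup>+\<omega>. ennreal (exp (l * - f \<omega>)) \<partial>lw (k0 + m)) \<le> ennreal (exp (l\<^sup>2 * V / 2))"
        by simp
    qed simp
    finally show ?thesis unfolding bnd .
  qed
  let ?T = "{\<omega> \<in> space path_space. \<bar>pc (M - n) \<omega> x0 y0 - pc (N - n) \<omega> x0 y0\<bar> \<ge> \<epsilon>}"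
  have sub: "?T \<subseteq> {\<omega> \<in> space path_space. f \<omega> \<ge> \<epsilon>} \<union> {\<omega> \<in> space path_space. - f \<omega> \<ge> \<epsilon>}"
    unfolding f_def SS_def K k0_def by auto
  have s1: "{\<omega> \<in> space path_space. f \<omega> \<ge> \<epsilon>} \<in> sets (lw (k0 + m))" by (simp only: sets_law) measurable
  have s2: "{\<omega> \<in> space path_space. - f \<omega> \<ge> \<epsilon>} \<in> sets (lw (k0 + m))" by (simp only: sets_law) measurable
  have "emeasure (lw (k0 + m)) ?T \<le> emeasure (lw (k0 + m)) ({\<omega> \<in> space path_space. f \<omega> \<ge> \<epsilon>} \<union> {\<omega> \<in> space path_space. - f \<omega> \<ge> \<epsilon>})"
    by (rule emeasure_mono[OF sub]) (use s1 s2 in auto)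
  also have "\<dots> \<le> emeasure (lw (k0 + m)) {\<omega> \<in> space path_space. f \<omega> \<ge> \<epsilon>} + emeasure (lw (k0 + m)) {\<omega> \<in> space path_space. - f \<omega> \<ge> \<epsilon>}"
    by (rule emeasure_subadditive[OF s1 s2])
  also have "\<dots> \<le> ennreal (exp (- (\<epsilon>\<^sup>2 / (2 * V)))) + ennreal (exp (- (\<epsilon>\<^sup>2 / (2 * V))))"
    by (rule add_mono[OF E1 E2])
  also have "\<dots> = ennreal (2 * exp (- (\<epsilon>\<^sup>2 / (2 * V))))"
    by (simp add: ennreal_plus[symmetric] del: ennreal_plus)
  finally have T: "emeasure (lw (k0 + m)) ?T \<le> ennreal (2 * exp (- (\<epsilon>\<^sup>2 / (2 * V))))" .
  interpret P: prob_space "lw (k0 + m)" by (rule law_prob)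
  have "measure (lw (k0 + m)) ?T \<le> 2 * exp (- (\<epsilon>\<^sup>2 / (2 * V)))"
    using T by (simp add: P.emeasure_eq_measure)
  also have "\<dots> \<le> 2 * exp (- \<epsilon>\<^sup>2 / (4 * \<epsilon> * C * alpha (N + 1) / 3 + 2 * C\<^sup>2 * \<Sigma>))"
    unfolding V_def using exp_compare[OF e Cpos alpha_pos \<Sigma>pos, of "N + 1"] by simp
  finally show ?thesis unfolding K[symmetric] C_def \<Sigma>_def .
qed

end

lemma emeasure_distr_conv:
  "emeasure (distr L S f) A = (if A \<in> sets S \<and> measure_space (space S) (sets S) (\<lambda>A. emeasure L (f -` A \<inter> space L))
     then emeasure L (f -` A \<inter> space L) else 0)"
  unfolding distr_def emeasure_measure_of_conv by (simp add: sets.sigma_sets_eq)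

lemma distr_dichotomy:
  assumes L: "prob_space L" and g: "g \<in> L \<rightarrow>\<^sub>M S" and Z: "Z \<in> sets L" "emeasure L Z = 0"
    and fg: "\<And>\<omega>. \<omega> \<in> space L - Z \<Longrightarrow> f \<omega> = g \<omega>" and fS: "\<And>\<omega>. \<omega> \<in> space L \<Longrightarrow> f \<omega> \<in> space S"
  shows "distr L S f = distr L S g \<or> (\<forall>A. emeasure (distr L S f) A = 0)"
proof (cases "measure_space (space S) (sets S) (\<lambda>A. emeasure L (f -` A \<inter> space L))")
  case False
  then show ?thesis by (simp add: emeasure_distr_conv)
next
  case True
  interpret prob_space L by (rule L)
  have em: "emeasure (distr L S f) A = emeasure L (f -` A \<inter> space L)" if "A \<in> sets S" for A
    using True that by (simp add: emeasure_distr_conv)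
  have Zn: "Z \<in> null_sets L" using Z by (simp add: null_sets_def)
  have "emeasure (distr L S f) A = emeasure (distr L S g) A" if A: "A \<in> sets S" for A
  proof -
    define F where "F = f -` A \<inter> space L"
    define G where "G = g -` A \<inter> space L"
    have G: "G \<in> sets L" unfolding G_def using g A by (rule measurable_sets)
    have FZ: "F \<union> Z = G \<union> Z" unfolding F_def G_def using fg sets.sets_into_space[OF Z(1)] by auto
    have F: "F \<in> sets L"
    proof (rule ccontr)
      assume nF: "F \<notin> sets L"
      have cA: "space S - A \<in> sets S" using A by auto
      have F': "f -` (space S - A) \<inter> space L = space L - F" unfolding F_def using fS by auto
      have nF': "space L - F \<notin> sets L"
      proof
        assume "space L - F \<in> sets L"
        then have "space L - (space L - F) \<in> sets L" by auto
        moreover have "space L - (space L - F) = F" unfolding F_def by auto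
        ultimately show False using nF by simp
      qed
      have "emeasure (distr L S f) A + emeasure (distr L S f) (space S - A) = emeasure (distr L S f) (A \<union> (space S - A))"
        using A cA by (intro plus_emeasure) auto
      also have "A \<union> (space S - A) = space S" using sets.sets_into_space[OF A] by auto
      finally have "emeasure (distr L S f) A + emeasure (distr L S f) (space S - A) = emeasure (distr L S f) (space S)" .
      moreover have "emeasure (distr L S f) A = 0" using em[OF A] nF by (simp add: F_def emeasure_notin_sets)
      moreover have "emeasure (distr L S f) (space S - A) = 0" using em[OF cA] nF' F' by (simp add: emeasure_notin_sets)
      moreover have "emeasure (distr L S f) (space S) = 1"
      proof -
        have "f -` space S \<inter> space L = space L" using fS by auto
        then show ?thesis using em[of "space S"] by (simp add: emeasure_space_1)
      qed
      ultimately show False by simp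
    qed
    have "emeasure L F = emeasure L G"
    proof -
      have "emeasure L F = emeasure L (F \<union> Z)" using emeasure_Un_null_set[OF F Zn] by simp
      also have "\<dots> = emeasure L (G \<union> Z)" by (simp add: FZ)
      also have "\<dots> = emeasure L G" using emeasure_Un_null_set[OF G Zn] by simp
      finally show ?thesis .
    qed
    then show ?thesis using em[OF A] emeasure_distr[OF g A] unfolding F_def G_def by simp
  qed
  then have "distr L S f = distr L S g" by (intro measure_eqI) auto
  then show ?thesis by simp
qed

lemma zero_measure_nn_integral:
  assumes "\<And>A. emeasure D A = 0"
  shows "integral\<^sup>N D h = 0"
proof -
  have "D = null_measure D" by (rule measure_eqI) (simp_all add: assms)
  then have "integral\<^sup>N D h = integral\<^sup>N (null_measure D) h" by simp
  then show ?thesis by simp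
qed

lemma join_zero:
  assumes "\<And>A. emeasure D A = 0"
  shows "emeasure (join D) B = 0"
  unfolding join_def emeasure_measure_of_conv using zero_measure_nn_integral[OF assms] by simp

lemma bind_zero:
  assumes "\<And>A. emeasure L A = 0" "space L \<noteq> {}"
  shows "emeasure (bind L f) B = 0"
proof -
  have "emeasure (distr L S f) A = 0" for S A
    unfolding emeasure_distr_conv using assms(1) by simp
  then show ?thesis unfolding bind_nonempty[OF assms(2)] by (intro join_zero) simp
qed

locale redux =
  fixes p0 :: "real^'d::finite \<Rightarrow> real \<Rightarrow> real" and \<rho>y :: real and \<rho>x :: "'d \<Rightarrow> real" and n :: nat
    and xs :: "nat \<Rightarrow> real^'d" and x :: "real^'d"
  assumes dens0: "\<And>x'. is_dens (p0 x')"
    and ry: "0 < \<rho>y" "\<rho>y < 1"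
    and rx: "\<And>j. 0 < \<rho>x j \<and> \<rho>x j < 1"
    and n1: "n \<ge> 1"
begin

definition S0 :: "(real^'d) set" where "S0 = xs ` {..<n}"
definition TT0 :: "(real^'d) set" where "TT0 = insert x S0"
definition p1 :: "real^'d \<Rightarrow> real \<Rightarrow> real" where "p1 x' t = (if x' \<in> TT0 then p0 x' t else p0 x t)"

lemma finite_TT0: "finite TT0" unfolding TT0_def S0_def by simp

lemma S0_TT0: "S0 \<subseteq> TT0" unfolding TT0_def by auto

lemma dens1: "is_dens (p1 x')"
proof (cases "x' \<in> TT0")
  case True
  then have "p1 x' = p0 x'" by (simp add: p1_def fun_eq_iff)
  then show ?thesis using dens0 by simp
next
  case False
  then have "p1 x' = p0 x" by (simp add: p1_def fun_eq_iff)
  then show ?thesis using dens0 by simp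
qed

lemma joint1: "(\<lambda>z. p1 (fst z) (snd z)) \<in> borel_measurable (borel \<Otimes>\<^sub>M borel)"
proof -
  have eq: "(\<lambda>z. p1 (fst z) (snd z)) = (\<lambda>z. (\<Sum>s\<in>TT0. indicator {s} (fst z) * p0 s (snd z)) + indicator (- TT0) (fst z) * p0 x (snd z))"
  proof
    fix z :: "(real^'d) \<times> real"
    show "p1 (fst z) (snd z) = (\<Sum>s\<in>TT0. indicator {s} (fst z) * p0 s (snd z)) + indicator (- TT0) (fst z) * p0 x (snd z)"
    proof (cases "fst z \<in> TT0")
      case True
      have "(\<Sum>s\<in>TT0. indicator {s} (fst z) * p0 s (snd z)) = (\<Sum>s\<in>TT0. if fst z = s then p0 s (snd z) else 0)"
        by (intro sum.cong refl) (simp split: split_indicator)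
      also have "\<dots> = p0 (fst z) (snd z)" using True finite_TT0 by (simp add: sum.delta)
      finally show ?thesis using True by (simp add: p1_def)
    next
      case False
      have "(\<Sum>s\<in>TT0. indicator {s} (fst z) * p0 s (snd z)) = 0"
        using False by (intro sum.neutral) (auto split: split_indicator)
      then show ?thesis using False by (simp add: p1_def)
    qed
  qed
  have [measurable]: "p0 s \<in> borel_measurable borel" for s using dens0 by (rule is_dens_borel)
  have [measurable]: "- TT0 \<in> sets borel"
    using finite_TT0 by (intro borel_comp borel_closed finite_imp_closed)
  show ?thesis unfolding eq by measurable
qed

sublocale M1: prmodel_xs p1 \<rho>y \<rho>x n xs
  by unfold_locales (use dens1 joint1 ry rx n1 in auto)

lemma agree:
  assumes "\<forall>j<k. fst (\<omega> j) \<in> TT0"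
  shows "x' \<in> TT0 \<Longrightarrow> pdens p0 \<rho>y \<rho>x n k \<omega> x' = pdens p1 \<rho>y \<rho>x n k \<omega> x'"
  using assms
proof (induction k arbitrary: x')
  case 0 then show ?case by (auto simp: p1_def fun_eq_iff)
next
  case (Suc k)
  have IH: "\<And>x'. x' \<in> TT0 \<Longrightarrow> pdens p0 \<rho>y \<rho>x n k \<omega> x' = pdens p1 \<rho>y \<rho>x n k \<omega> x'"
    using Suc.prems(2) by (intro Suc.IH) auto
  have "fst (\<omega> k) \<in> TT0" using Suc.prems(2) by simp
  then show ?case using Suc.prems(1) by (simp add: Let_def IH)
qed

lemma pcdf_agree:
  assumes "\<forall>j<k. fst (\<omega> j) \<in> TT0" "x' \<in> TT0"
  shows "pcdf p0 \<rho>y \<rho>x n k \<omega> x' y = pcdf p1 \<rho>y \<rho>x n k \<omega> x' y"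
  unfolding pcdf_def using agree[OF assms] by simp

lemma step_agree:
  assumes "\<forall>j<k. fst (\<omega> j) \<in> S0"
  shows "step p0 \<rho>y \<rho>x n xs k \<omega> = step p1 \<rho>y \<rho>x n xs k \<omega>"
  unfolding step_def
proof (intro bind_cong refl)
  fix j assume "j \<in> space (uniform_count_measure {..<n + k})"
  then have j: "j < n + k" by (simp add: space_uniform_count_measure)
  have X: "(if j < n then xs j else fst (\<omega> (j - n))) \<in> TT0"
    using j assms S0_TT0 by (auto simp: S0_def)
  have A: "\<forall>j<k. fst (\<omega> j) \<in> TT0" using assms S0_TT0 by auto
  show "(let X = if j < n then xs j else fst (\<omega> (j - n))
       in distr (density lborel (\<lambda>y. ennreal (pdens p0 \<rho>y \<rho>x n k \<omega> X y))) borel (\<lambda>y. (X, y))) =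
        (let X = if j < n then xs j else fst (\<omega> (j - n))
       in distr (density lborel (\<lambda>y. ennreal (pdens p1 \<rho>y \<rho>x n k \<omega> X y))) borel (\<lambda>y. (X, y)))"
    unfolding Let_def agree[OF A X] ..
qed

definition Zs :: "nat \<Rightarrow> (nat \<Rightarrow> (real^'d) \<times> real) set" where
  "Zs k = {\<omega>. \<exists>j\<in>{..<k}. fst (\<omega> j) \<notin> S0}"

lemma S0_borel[measurable]: "S0 \<in> sets borel"
  unfolding S0_def by (intro borel_closed finite_imp_closed) simp

lemma Zs_sets[measurable]: "Zs k \<in> sets path_space"
proof -
  have "Zs k = {\<omega> \<in> space path_space. \<exists>j\<in>{..<k}. fst (\<omega> j) \<notin> S0}" by (simp add: Zs_def)
  also have "\<dots> \<in> sets path_space" by measurable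
  finally show ?thesis .
qed

lemma Zs_null: "emeasure (M1.lw k) (Zs k) = 0"
proof (induction k)
  case 0 then show ?case by (simp add: Zs_def)
next
  case (Suc k)
  have m: "indicator (Zs (Suc k)) \<in> borel_measurable path_space" by measurable
  have "emeasure (M1.lw (Suc k)) (Zs (Suc k)) = (\<integral>\<^sup>+w. indicator (Zs (Suc k)) w \<partial>M1.lw (Suc k))"
    by (rule nn_integral_indicator[symmetric]) simp
  also have "\<dots> = (\<integral>\<^sup>+\<omega>. (\<integral>\<^sup>+z. indicator (Zs (Suc k)) (fun_upd \<omega> k z) \<partial>M1.st k \<omega>) \<partial>M1.lw k)"
    by (rule M1.nn_integral_law_Suc[OF m])
  also have "\<dots> = (\<integral>\<^sup>+\<omega>. 0 \<partial>M1.lw k)"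
  proof (rule nn_integral_cong_AE)
    have "AE \<omega> in M1.lw k. \<omega> \<notin> Zs k"
      using Suc.IH by (intro AE_I[where N="Zs k"]) auto
    then show "AE \<omega> in M1.lw k. (\<integral>\<^sup>+z. indicator (Zs (Suc k)) (fun_upd \<omega> k z) \<partial>M1.st k \<omega>) = 0"
    proof eventually_elim
      case (elim \<omega>)
      then have ok: "\<forall>j<k. fst (\<omega> j) \<in> S0" by (auto simp: Zs_def)
      have mi: "(\<lambda>z. indicator (Zs (Suc k)) (fun_upd \<omega> k z) :: ennreal) \<in> borel_measurable borel" by measurable
      have "(\<integral>\<^sup>+z. indicator (Zs (Suc k)) (fun_upd \<omega> k z) \<partial>M1.st k \<omega>) =
        (\<Sum>j<n + k. (\<integral>\<^sup>+y. ennreal (pdens p1 \<rho>y \<rho>x n k \<omega> (M1.Xj j \<omega>) y) * indicator (Zs (Suc k)) (fun_upd \<omega> k (M1.Xj j \<omega>, y)) \<partial>lborel)) / of_nat (n + k)"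
        by (rule M1.nn_integral_st[OF mi])
      also have "\<dots> = 0"
      proof -
        have "indicator (Zs (Suc k)) (fun_upd \<omega> k (M1.Xj j \<omega>, y)) = (0::ennreal)" if "j < n + k" for j y
        proof -
          have "M1.Xj j \<omega> \<in> S0" using that ok by (auto simp: M1.Xj_def S0_def)
          then have "fun_upd \<omega> k (M1.Xj j \<omega>, y) \<notin> Zs (Suc k)" using ok
            by (auto simp: Zs_def less_Suc_eq)
          then show ?thesis by simp
        qed
        then show ?thesis by simp
      qed
      finally show ?case .
    qed
  qed
  finally show ?case by simp
qed

end

context redux
begin

abbreviation "f0 k \<equiv> (\<lambda>\<omega>. distr (step p0 \<rho>y \<rho>x n xs k \<omega>) path_space (\<lambda>z. fun_upd \<omega> k z))"

lemma step0_props: "prob_space (step p0 \<rho>y \<rho>x n xs k \<omega>) \<and> sets (step p0 \<rho>y \<rho>x n xs k \<omega>) = sets borel"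
proof -
  define kf where "kf j = (let X = if j < n then xs j else fst (\<omega> (j - n))
       in distr (density lborel (\<lambda>y. ennreal (pdens p0 \<rho>y \<rho>x n k \<omega> X y))) borel (\<lambda>y. (X, y)))" for j
  have st: "step p0 \<rho>y \<rho>x n xs k \<omega> = bind (uniform_count_measure {..<n + k}) kf"
    unfolding step_def kf_def ..
  have kp: "prob_space (kf j)" for j
  proof -
    define X where "X = (if j < n then xs j else fst (\<omega> (j - n)))"
    interpret real_distribution "density lborel (\<lambda>y. ennreal (pdens p0 \<rho>y \<rho>x n k \<omega> X y))"
      by (rule real_distribution_dens[OF dens_all[OF dens0 ry rx]])
    show ?thesis unfolding kf_def X_def[symmetric] Let_def by (intro prob_space_distr) simp
  qed
  have ks: "sets (kf j) = sets borel" for j unfolding kf_def Let_def by simp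
  have km: "kf \<in> uniform_count_measure {..<n + k} \<rightarrow>\<^sub>M subprob_algebra borel"
  proof -
    have "kf \<in> count_space {..<n + k} \<rightarrow>\<^sub>M subprob_algebra borel"
      using kp ks by (auto simp: space_subprob_algebra prob_space_imp_subprob_space)
    then show ?thesis by (simp only: measurable_cong_sets[OF sets_uniform_count_measure_count_space refl])
  qed
  interpret U: prob_space "uniform_count_measure {..<n + k}"
    using n1 by (intro prob_space_uniform_count_measure) auto
  have "prob_space (step p0 \<rho>y \<rho>x n xs k \<omega>)" unfolding st
    by (rule U.prob_space_bind[OF _ km]) (simp add: kp)
  moreover have "sets (step p0 \<rho>y \<rho>x n xs k \<omega>) = sets borel" unfolding st using n1
    by (subst sets_bind[where N=borel]) (auto simp: space_uniform_count_measure ks)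
  ultimately show ?thesis by simp
qed

lemma f0_space: "f0 k \<omega> \<in> space (subprob_algebra path_space)"
proof -
  have m: "(\<lambda>z. fun_upd \<omega> k z) \<in> step p0 \<rho>y \<rho>x n xs k \<omega> \<rightarrow>\<^sub>M path_space"
  proof -
    have "(\<lambda>z. fun_upd \<omega> k z) \<in> borel \<rightarrow>\<^sub>M path_space" by measurable
    then show ?thesis using step0_props by (simp cong: measurable_cong_sets)
  qed
  have "prob_space (f0 k \<omega>)" using step0_props m by (intro prob_space.prob_space_distr) auto
  then show ?thesis by (simp add: space_subprob_algebra prob_space_imp_subprob_space)
qed

lemma law0_sets: "sets (law p0 \<rho>y \<rho>x n xs k) = sets path_space"
proof (induction k)
  case 0 then show ?case by simp
next
  case (Suc k)
  have "space (law p0 \<rho>y \<rho>x n xs k) = space path_space" using sets_eq_imp_space_eq[OF Suc.IH] .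
  then show ?case unfolding law.simps(2) by (intro sets_bind[where N=path_space]) auto
qed

lemma law0_space: "space (law p0 \<rho>y \<rho>x n xs k) = UNIV"
  using sets_eq_imp_space_eq[OF law0_sets] by simp

lemma law_dich: "law p0 \<rho>y \<rho>x n xs k = M1.lw k \<or> (\<forall>A. emeasure (law p0 \<rho>y \<rho>x n xs k) A = 0)"
proof (induction k)
  case 0 then show ?case by simp
next
  case (Suc k)
  have sp0: "space (law p0 \<rho>y \<rho>x n xs k) = UNIV" by (rule law0_space)
  have b0: "law p0 \<rho>y \<rho>x n xs (Suc k) = join (distr (law p0 \<rho>y \<rho>x n xs k) (subprob_algebra path_space) (f0 k))"
  proof -
    have "subprob_algebra (f0 k (SOME x. x \<in> space (law p0 \<rho>y \<rho>x n xs k))) = subprob_algebra path_space"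
      by (rule subprob_algebra_cong) simp
    then show ?thesis using sp0 by (simp add: bind_nonempty)
  qed
  from Suc.IH show ?case
  proof
    assume eq: "law p0 \<rho>y \<rho>x n xs k = M1.lw k"
    have b1: "M1.lw (Suc k) = join (distr (M1.lw k) (subprob_algebra path_space) (M1.KK k))"
    proof -
      have "subprob_algebra (M1.KK k (SOME x. x \<in> space (M1.lw k))) = subprob_algebra path_space"
        by (rule subprob_algebra_cong) (simp add: M1.KK_def)
      then show ?thesis unfolding M1.law_Suc by (simp add: bind_nonempty)
    qed
    have gm: "M1.KK k \<in> M1.lw k \<rightarrow>\<^sub>M subprob_algebra path_space"
      using M1.KK_meas by (simp cong: measurable_cong_sets)
    have fg: "f0 k \<omega> = M1.KK k \<omega>" if "\<omega> \<in> space (M1.lw k) - Zs k" for \<omega>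
    proof -
      have "\<forall>j<k. fst (\<omega> j) \<in> S0" using that by (auto simp: Zs_def)
      then show ?thesis unfolding M1.KK_def by (simp add: step_agree)
    qed
    have dd: "distr (M1.lw k) (subprob_algebra path_space) (f0 k) = distr (M1.lw k) (subprob_algebra path_space) (M1.KK k)
       \<or> (\<forall>A. emeasure (distr (M1.lw k) (subprob_algebra path_space) (f0 k)) A = 0)"
      by (rule distr_dichotomy[OF M1.law_prob gm _ Zs_null fg f0_space]) simp_all
    then show ?case
    proof
      assume "distr (M1.lw k) (subprob_algebra path_space) (f0 k) = distr (M1.lw k) (subprob_algebra path_space) (M1.KK k)"
      then show ?case using b0 b1 eq by simp
    next
      assume z: "\<forall>A. emeasure (distr (M1.lw k) (subprob_algebra path_space) (f0 k)) A = 0"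
      have "emeasure (law p0 \<rho>y \<rho>x n xs (Suc k)) A = 0" for A
        unfolding b0 eq by (rule join_zero) (use z in simp)
      then show ?case by simp
    qed
  next
    assume z: "\<forall>A. emeasure (law p0 \<rho>y \<rho>x n xs k) A = 0"
    have "emeasure (law p0 \<rho>y \<rho>x n xs (Suc k)) A = 0" for A
      unfolding law.simps(2) by (rule bind_zero) (use z sp0 in auto)
    then show ?case by simp
  qed
qed

end

context redux
begin

lemma final_bound:
  assumes NM: "n \<le> N" "N < M" and e: "\<epsilon> \<ge> 0"
  shows "measure (law p0 \<rho>y \<rho>x n xs (M - n))
     {\<omega> \<in> space path_space. \<bar>pcdf p0 \<rho>y \<rho>x n (M - n) \<omega> x y - pcdf p0 \<rho>y \<rho>x n (N - n) \<omega> x y\<bar> \<ge> \<epsilon>}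
     \<le> 2 * exp (- \<epsilon>\<^sup>2 / (4 * \<epsilon> * (2 * Cb \<rho>x x) * alpha (N + 1) / 3
                          + 2 * (2 * Cb \<rho>x x)\<^sup>2 * (\<Sum>i = N + 1..M. (alpha i)\<^sup>2)))"
    (is "measure _ ?E \<le> ?R")
proof -
  let ?K = "M - n"
  have R0: "?R \<ge> 0" by simp
  from law_dich[of ?K] show ?thesis
  proof
    assume z: "\<forall>A. emeasure (law p0 \<rho>y \<rho>x n xs ?K) A = 0"
    have "measure (law p0 \<rho>y \<rho>x n xs ?K) ?E = 0" using z by (simp add: measure_def)
    then show ?thesis using R0 by simp
  next
    assume eq: "law p0 \<rho>y \<rho>x n xs ?K = M1.lw ?K"
    let ?E1 = "{\<omega> \<in> space path_space. \<bar>pcdf p1 \<rho>y \<rho>x n (M - n) \<omega> x y - pcdf p1 \<rho>y \<rho>x n (N - n) \<omega> x y\<bar> \<ge> \<epsilon>}"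
    interpret P: prob_space "M1.lw ?K" by (rule M1.law_prob)
    have b1: "measure (M1.lw ?K) ?E1 \<le> ?R" by (rule M1.main_meas[OF NM e])
    show ?thesis
    proof (cases "?E \<in> sets (M1.lw ?K)")
      case False
      then have "measure (M1.lw ?K) ?E = 0" by (rule measure_notin_sets)
      then show ?thesis using eq R0 by simp
    next
      case True
      have E1s: "?E1 \<in> sets (M1.lw ?K)" by (simp only: M1.sets_law) measurable
      have Zs: "Zs ?K \<in> sets (M1.lw ?K)" by simp
      have sub: "?E \<subseteq> ?E1 \<union> Zs ?K"
      proof
        fix \<omega> assume w: "\<omega> \<in> ?E"
        show "\<omega> \<in> ?E1 \<union> Zs ?K"
        proof (cases "\<omega> \<in> Zs ?K")
          case False
          then have ok: "\<forall>j<?K. fst (\<omega> j) \<in> TT0" using S0_TT0 by (auto simp: Zs_def)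
          then have ok2: "\<forall>j<N - n. fst (\<omega> j) \<in> TT0" using NM by auto
          have xT: "x \<in> TT0" by (simp add: TT0_def)
          show ?thesis using w pcdf_agree[OF ok xT] pcdf_agree[OF ok2 xT] by simp
        qed simp
      qed
      have "measure (M1.lw ?K) ?E \<le> measure (M1.lw ?K) (?E1 \<union> Zs ?K)"
        using sub E1s Zs by (intro P.finite_measure_mono) auto
      also have "\<dots> \<le> measure (M1.lw ?K) ?E1 + measure (M1.lw ?K) (Zs ?K)"
        using E1s Zs by (rule measure_Un_le)
      also have "measure (M1.lw ?K) (Zs ?K) = 0" using Zs_null[of ?K] by (simp add: measure_def)
      finally show ?thesis using b1 eq by simp
    qed
  qed
qed

end

theorem proposition2:
  fixes \<rho>y :: real and \<rho>x :: "'d::finite \<Rightarrow> real" and x :: "real^'d"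
  assumes "0 < \<rho>y" "\<rho>y < 1" "\<And>j. 0 < \<rho>x j \<and> \<rho>x j < 1"
  shows "\<exists>C::real. C > 0 \<and>
    (\<forall>(n::nat) (xs :: nat \<Rightarrow> real^'d) (p0 :: real^'d \<Rightarrow> real \<Rightarrow> real).
       n \<ge> 1 \<and>
       (\<forall>x'. p0 x' \<in> borel_measurable lborel \<and> (\<forall>t. p0 x' t \<ge> 0)
              \<and> integrable lborel (p0 x') \<and> (LINT t|lborel. p0 x' t) = 1)
       \<longrightarrow> (\<forall>M N (\<epsilon>::real) (y::real). n \<le> N \<and> N < M \<and> \<epsilon> \<ge> 0 \<longrightarrow>
             measure (law p0 \<rho>y \<rho>x n xs (M - n))
               {\<omega> \<in> space path_space.
                  \<bar>pcdf p0 \<rho>y \<rho>x n (M - n) \<omega> x y - pcdf p0 \<rho>y \<rho>x n (N - n) \<omega> x y\<bar> \<ge> \<epsilon>}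
             \<le> 2 * exp (- \<epsilon>\<^sup>2 / (4 * \<epsilon> * C * alpha (N + 1) / 3
                                 + 2 * C\<^sup>2 * (\<Sum>i = N + 1..M. (alpha i)\<^sup>2)))))"
proof (intro exI[of _ "2 * Cb \<rho>x x"] conjI allI impI)
  show "2 * Cb \<rho>x x > 0" using Cb_pos[OF assms(3)] by simp
  fix n :: nat and xs :: "nat \<Rightarrow> real^'d" and p0 :: "real^'d \<Rightarrow> real \<Rightarrow> real" and M N :: nat and \<epsilon> y :: real
  assume H: "n \<ge> 1 \<and> (\<forall>x'. p0 x' \<in> borel_measurable lborel \<and> (\<forall>t. p0 x' t \<ge> 0)
              \<and> integrable lborel (p0 x') \<and> (LINT t|lborel. p0 x' t) = 1)"
  assume NM: "n \<le> N \<and> N < M \<and> \<epsilon> \<ge> 0"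
  interpret R: redux p0 \<rho>y \<rho>x n xs x
    by unfold_locales (use H assms in \<open>auto simp: is_dens_def\<close>)
  show "measure (law p0 \<rho>y \<rho>x n xs (M - n))
               {\<omega> \<in> space path_space.
                  \<bar>pcdf p0 \<rho>y \<rho>x n (M - n) \<omega> x y - pcdf p0 \<rho>y \<rho>x n (N - n) \<omega> x y\<bar> \<ge> \<epsilon>}
             \<le> 2 * exp (- \<epsilon>\<^sup>2 / (4 * \<epsilon> * (2 * Cb \<rho>x x) * alpha (N + 1) / 3
                                 + 2 * (2 * Cb \<rho>x x)\<^sup>2 * (\<Sum>i = N + 1..M. (alpha i)\<^sup>2)))"
    using NM by (intro R.final_bound) auto
qed

end
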